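(* Under Conditions 1 and 2, $$\lim_{n\to\infty}\int_0^\infty R^{(n)}_\beta(\gamma_nt)\,dt=\frac1{b+m+\beta\sigma\lambda}<\infty .$$ Moreover, there exist constants $C>0$ and $n_0\ge1$ such that for all $n>n_0$ and all $\kappa\ge1$, $\int_0^\infty|R_\beta^{(n)}(\gamma_nt)|^\kappa dt\le C^\kappa$.
   Context: Notation: $\mathbb Z_+=\{1,2,\dots\}$, $\mathbb R_+=[0,\infty)$. For each $n\ge1$: $\lambda^{(n)}>0$; a probability $\Lambda^{(n)}$ on $\mathbb R_+$ with tail $\bar\Lambda^{(n)}(t)=\Lambda^{(n)}((t,\infty))$, $\eta^{(n)}=\int_0^\infty y\Lambda^{(n)}(dy)$, $\sigma^{(n)}=\frac12\int_0^\infty y^2\Lambda^{(n)}(dy)$ finite; probability laws $(p_k^{(n)})_{k\ge1}$, $(q_k^{(n)})_{k\ge1}$ on $\mathbb Z_+$ with generating functions $g^{(n)},h^{(n)}$, $m^{(n)}=\sum_kkp_k^{(n)}<\infty$; $\gamma_n>0$ with $\gamma_n\to\infty$, $\gamma_n/n\to\gamma_*\in[0,\infty)$. $\phi^{(n)}(z)=n\gamma_n[g^{(n)}(1-z/n)-(1-z/n)]$, $\psi^{(n)}(z)=\gamma_n[1-h^{(n)}(1-z/n)]$ for $z\in[0,n]$. Condition 1: (i) $\lambda^{(n)}\to\lambda>0$, $\eta^{(n)}\to\eta>0$, $\sigma^{(n)}\to\sigma>0$, $\gamma_n(1-\lambda^{(n)}\eta^{(n)})\to b\in\mathbb R$; (ii)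 $\psi^{(n)}\to\psi$ uniformly on compacts of $[0,\infty)$; (iii) $\{\phi^{(n)}\}$ is uniformly Lipschitz on bounded intervals and converges uniformly on compacts to a continuous $\phi$. Under Condition 1, $\lambda\eta=1$ and $m:=\lim_n\gamma_n(1-m^{(n)})$ exists (so $\gamma_n(1-\lambda^{(n)}\eta^{(n)}m^{(n)})\to b+m$). Condition 2 (for some $\alpha\in(1,2)$): (1) there are $C,k_0>0$ with $n\gamma_n\sum_{k\ge k_0}(k/n)^\alpha p^{(n)}_k+\sum_kk^\alpha q^{(n)}_k\le C$ for all $n$, and $\lim_{k_1\to\infty}\limsup_n\gamma_n\sum_{k\ge k_1}kp^{(n)}_k=0$; (2) there are $C_0>0$ and a probability $\Lambda^*$ on $\mathbb R_+$ with $\int t^{2\alpha}\Lambda^*(dt)<\infty$ and $\bar\Lambda^{(n)}\le C_0\bar\Lambda^*$ for all $n$. Fix $\beta\in[0,\infty)$ with $\beta>-(b+m)/(\sigma\lambda)$. Let $R^{(n)}$ be the unique locally integrable solution of $R^{(n)}(t)=\lambda^{(n)}m^{(n)}\bar\Lambda^{(n)}(t)+\lambda^{(n)}m^{(n)}\int_0^tR^{(n)}(t-s)\bar\Lambda^{(n)}(s)ds$, $t\ge0$, and $R^{(n)}_\beta(t)=e^{-\beta t/\gamma_n}R^{(n)}(t)$. *)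

theory Defs
  imports "HOL-Probability.Probability"
begin

definition gen_fun :: "(nat \<Rightarrow> real) \<Rightarrow> real \<Rightarrow> real" where
  "gen_fun p s = (\<Sum>k. p k * s ^ k)"

definition tail :: "real measure \<Rightarrow> real \<Rightarrow> real" where
  "tail M t = measure M {t<..}"

definition phi_n :: "(nat \<Rightarrow> real) \<Rightarrow> real \<Rightarrow> nat \<Rightarrow> real \<Rightarrow> real" where
  "phi_n p gn n z = real n * gn * (gen_fun p (1 - z / real n) - (1 - z / real n))"

definition psi_n :: "(nat \<Rightarrow> real) \<Rightarrow> real \<Rightarrow> nat \<Rightarrow> real \<Rightarrow> real" where
  "psi_n q gn n z = gn * (1 - gen_fun q (1 - z / real n))"

end

theory Submission
  imports Defs
begin



lemma conv_swap:
  fixes g v :: "real \<Rightarrow> real"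
  assumes [measurable]: "g \<in> borel_measurable borel" "v \<in> borel_measurable borel" "A \<in> sets borel"
  shows "(\<integral>\<^sup>+t. indicator A t * (\<integral>\<^sup>+s. ennreal (g s) * ennreal (v (t - s)) \<partial>lborel) \<partial>lborel)
       = (\<integral>\<^sup>+s. ennreal (g s) * (\<integral>\<^sup>+ w. indicator A (s + w) * ennreal (v w) \<partial>lborel) \<partial>lborel)"
proof -
  have "(\<integral>\<^sup>+t. indicator A t * (\<integral>\<^sup>+s. ennreal (g s) * ennreal (v (t - s)) \<partial>lborel) \<partial>lborel)
     = (\<integral>\<^sup>+t. (\<integral>\<^sup>+s. indicator A t * (ennreal (g s) * ennreal (v (t - s))) \<partial>lborel) \<partial>lborel)"
    by (subst nn_integral_cmult) auto
  also have "\<dots> = (\<integral>\<^sup>+s. (\<integral>\<^sup>+t. indicator A t * (ennreal (g s) * ennreal (v (t - s))) \<partial>lborel) \<partial>lborel)"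
    by (rule lborel_pair.Fubini'[symmetric]) measurable
  also have "\<dots> = (\<integral>\<^sup>+s. ennreal (g s) * (\<integral>\<^sup>+t. indicator A t * ennreal (v (t - s)) \<partial>lborel) \<partial>lborel)"
    by (rule nn_integral_cong, subst nn_integral_cmult[symmetric]) (auto intro!: nn_integral_cong simp: mult_ac)
  also have "\<dots> = (\<integral>\<^sup>+s. ennreal (g s) * (\<integral>\<^sup>+ w. indicator A (s + w) * ennreal (v w) \<partial>lborel) \<partial>lborel)"
  proof (rule nn_integral_cong)
    fix s
    have "(\<integral>\<^sup>+t. indicator A t * ennreal (v (t - s)) \<partial>lborel) = (\<integral>\<^sup>+x. indicator A (s + x) * ennreal (v x) \<partial>lborel)"
      using nn_integral_real_affine[where c=1 and t=s and f="\<lambda>t. indicator A t * ennreal (v (t - s))"] by simp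
    then show "ennreal (g s) * (\<integral>\<^sup>+t. indicator A t * ennreal (v (t - s)) \<partial>lborel) = ennreal (g s) * (\<integral>\<^sup>+ w. indicator A (s + w) * ennreal (v w) \<partial>lborel)"
      by simp
  qed
  finally show ?thesis .
qed


locale renew =
  fixes g u :: "real \<Rightarrow> real" and K G :: real
  assumes g_meas[measurable]: "g \<in> borel_measurable borel" and u_meas[measurable]: "u \<in> borel_measurable borel"
  and g_nonneg: "\<And>x. 0 \<le> g x" and g_le: "\<And>x. g x \<le> K" and g_neg: "\<And>x. x < 0 \<Longrightarrow> g x = 0"
  and g_anti: "\<And>x y. 0 \<le> x \<Longrightarrow> x \<le> y \<Longrightarrow> g y \<le> g x"
  and g_int: "(\<integral>\<^sup>+x. ennreal (g x) \<partial>lborel) = ennreal G" and G_lt: "G < 1" and G_nn: "0 \<le> G"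
  and K_pos: "0 < K"
  and u_neg: "\<And>x. x < 0 \<Longrightarrow> u x = 0"
  and u_loc: "\<And>x. (\<integral>\<^sup>+t. indicator {..x} t * ennreal \<bar>u t\<bar> \<partial>lborel) < \<infinity>"
  and u_eq: "\<And>t. u t = g t + (\<integral>s. g s * u (t - s) \<partial>lborel)"
begin

definition "V x = (\<integral>\<^sup>+t. indicator {..x} t * ennreal \<bar>u t\<bar> \<partial>lborel)"

lemma V_mono: "x \<le> y \<Longrightarrow> V x \<le> V y"
  unfolding V_def by (intro nn_integral_mono) (auto simp: indicator_def)

lemma step1: "ennreal \<bar>u t\<bar> \<le> ennreal (g t) + (\<integral>\<^sup>+s. ennreal (g s) * ennreal \<bar>u (t - s)\<bar> \<partial>lborel)"
proof -
  have a: "ennreal \<bar>u t\<bar> \<le> ennreal (g t) + ennreal (norm (\<integral>s. g s * u (t - s) \<partial>lborel))"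
  proof -
    have "\<bar>u t\<bar> \<le> g t + norm (\<integral>s. g s * u (t - s) \<partial>lborel)"
      using u_eq[of t] g_nonneg[of t] by (simp add: abs_if split: if_splits) linarith?
    then show ?thesis
      by (metis ennreal_leI ennreal_plus g_nonneg norm_ge_zero)
  qed
  have b: "ennreal (norm (\<integral>s. g s * u (t - s) \<partial>lborel)) \<le> (\<integral>\<^sup>+s. ennreal (g s) * ennreal \<bar>u (t - s)\<bar> \<partial>lborel)"
  proof (cases "integrable lborel (\<lambda>s. g s * u (t - s))")
    case True
    then have "ennreal (norm (\<integral>s. g s * u (t - s) \<partial>lborel)) \<le> (\<integral>\<^sup>+s. ennreal (norm (g s * u (t - s))) \<partial>lborel)"
      using integral_norm_bound_ennreal by blast
    also have "\<dots> = (\<integral>\<^sup>+s. ennreal (g s) * ennreal \<bar>u (t - s)\<bar> \<partial>lborel)"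
      by (intro nn_integral_cong) (simp add: abs_mult g_nonneg ennreal_mult)
    finally show ?thesis .
  next
    case False
    then show ?thesis by (simp add: not_integrable_integral_eq)
  qed
  from a b show ?thesis by (meson add_left_mono order_trans)
qed


lemma V_fin: "V x < \<infinity>" using u_loc unfolding V_def by simp

lemma conv_meas[measurable]: "(\<lambda>t. \<integral>\<^sup>+s. ennreal (g s) * ennreal \<bar>u (t - s)\<bar> \<partial>lborel) \<in> borel_measurable borel"
  by measurable

lemma shift_ind: "(\<integral>\<^sup>+ w. indicator {..x} (s + w) * ennreal \<bar>u w\<bar> \<partial>lborel) = V (x - s)"
  unfolding V_def by (intro nn_integral_cong) (auto simp: indicator_def)

lemma step2: "V x \<le> (\<integral>\<^sup>+t. indicator {..x} t * ennreal (g t) \<partial>lborel) + (\<integral>\<^sup>+s. ennreal (g s) * V (x - s) \<partial>lborel)"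
proof -
  have "V x \<le> (\<integral>\<^sup>+t. indicator {..x} t * ennreal (g t) + indicator {..x} t * (\<integral>\<^sup>+s. ennreal (g s) * ennreal \<bar>u (t - s)\<bar> \<partial>lborel) \<partial>lborel)"
    unfolding V_def
    by (intro nn_integral_mono) (metis distrib_left mult_left_mono step1 zero_le)
  also have "\<dots> = (\<integral>\<^sup>+t. indicator {..x} t * ennreal (g t) \<partial>lborel) + (\<integral>\<^sup>+t. indicator {..x} t * (\<integral>\<^sup>+s. ennreal (g s) * ennreal \<bar>u (t - s)\<bar> \<partial>lborel) \<partial>lborel)"
    by (rule nn_integral_add) auto
  also have "(\<integral>\<^sup>+t. indicator {..x} t * (\<integral>\<^sup>+s. ennreal (g s) * ennreal \<bar>u (t - s)\<bar> \<partial>lborel) \<partial>lborel)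
      = (\<integral>\<^sup>+s. ennreal (g s) * V (x - s) \<partial>lborel)"
    using conv_swap[of g "\<lambda>t. \<bar>u t\<bar>" "{..x}"] by (simp add: shift_ind)
  finally show ?thesis .
qed

lemma step2b: "V x \<le> ennreal G + ennreal G * V x"
proof -
  have "(\<integral>\<^sup>+t. indicator {..x} t * ennreal (g t) \<partial>lborel) \<le> (\<integral>\<^sup>+t. ennreal (g t) \<partial>lborel)"
    by (intro nn_integral_mono) (auto simp: indicator_def)
  moreover have "(\<integral>\<^sup>+s. ennreal (g s) * V (x - s) \<partial>lborel) \<le> (\<integral>\<^sup>+s. ennreal (g s) * V x \<partial>lborel)"
  proof (intro nn_integral_mono)
    fix s show "ennreal (g s) * V (x - s) \<le> ennreal (g s) * V x"
      by (cases "s < 0") (auto simp: g_neg intro!: mult_left_mono V_mono)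
  qed
  moreover have "(\<integral>\<^sup>+s. ennreal (g s) * V x \<partial>lborel) = ennreal G * V x"
    by (subst nn_integral_multc) (auto simp: g_int)
  ultimately show ?thesis using step2[of x] g_int by (metis add_mono order_trans)
qed

lemma V_bound: "V x \<le> ennreal (G / (1 - G))"
proof -
  obtain r where r: "V x = ennreal r" "0 \<le> r" using V_fin[of x]
    by (cases "V x") (auto simp: less_top ennreal_cases)
  have "ennreal r \<le> ennreal (G + G * r)" using step2b[of x] r G_nn
    by (simp add: ennreal_mult ennreal_plus)
  moreover have "0 \<le> G + G * r" using G_nn r by simp
  ultimately have "r \<le> G + G * r" using ennreal_le_iff by blast
  then have "r \<le> G / (1 - G)" using G_lt by (simp add: field_simps)
  then show ?thesis using r by simp
qed


lemma L1: "(\<integral>\<^sup>+t. ennreal \<bar>u t\<bar> \<partial>lborel) \<le> ennreal (G / (1 - G))"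
proof -
  have eq: "(\<lambda>t. ennreal \<bar>u t\<bar>) = (\<lambda>t. SUP n. indicator {..real n} t * ennreal \<bar>u t\<bar>)"
  proof
    fix t
    show "ennreal \<bar>u t\<bar> = (SUP n. indicator {..real n} t * ennreal \<bar>u t\<bar>)"
    proof (rule antisym)
      obtain n where "t \<le> real n" using real_arch_simple by blast
      then show "ennreal \<bar>u t\<bar> \<le> (SUP n. indicator {..real n} t * ennreal \<bar>u t\<bar>)"
        by (intro SUP_upper2[of n]) auto
      show "(SUP n. indicator {..real n} t * ennreal \<bar>u t\<bar>) \<le> ennreal \<bar>u t\<bar>"
        by (intro SUP_least) (auto simp: indicator_def)
    qed
  qed
  have "(\<integral>\<^sup>+t. ennreal \<bar>u t\<bar> \<partial>lborel) = (SUP n. V (real n))"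
    unfolding V_def
    by (subst eq, rule nn_integral_monotone_convergence_SUP) (auto simp: incseq_def le_fun_def indicator_def)
  also have "\<dots> \<le> ennreal (G / (1 - G))" by (intro SUP_least V_bound)
  finally show ?thesis .
qed

lemma u_int: "integrable lborel u"
  using L1 by (intro integrableI_bounded) (auto intro: le_less_trans[OF _ ennreal_less_top])

definition "Gc y = (\<integral>\<^sup>+w. indicator {..y} w * ennreal (g w) \<partial>lborel)"
definition "Gb y = (\<integral>\<^sup>+w. indicator {y<..} w * ennreal (g w) \<partial>lborel)"

lemma Gc_Gb: "Gc y + Gb y = ennreal G"
proof -
  have "Gc y + Gb y = (\<integral>\<^sup>+w. indicator {..y} w * ennreal (g w) + indicator {y<..} w * ennreal (g w) \<partial>lborel)"
    unfolding Gc_def Gb_def by (rule nn_integral_add[symmetric]) auto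
  also have "\<dots> = (\<integral>\<^sup>+w. ennreal (g w) \<partial>lborel)"
    by (intro nn_integral_cong) (auto simp: indicator_def)
  finally show ?thesis using g_int by simp
qed

lemma Gc_meas[measurable]: "Gc \<in> borel_measurable borel"
proof -
  have "Gc = (\<lambda>y. \<integral>\<^sup>+w. ennreal (if w \<le> y then g w else 0) \<partial>lborel)"
    unfolding Gc_def by (auto intro!: ext nn_integral_cong simp: indicator_def)
  also have "\<dots> \<in> borel_measurable borel" by measurable
  finally show ?thesis .
qed
lemma Gb_meas[measurable]: "Gb \<in> borel_measurable borel"
proof -
  have "Gb = (\<lambda>y. \<integral>\<^sup>+w. ennreal (if y < w then g w else 0) \<partial>lborel)"
    unfolding Gb_def by (auto intro!: ext nn_integral_cong simp: indicator_def)
  also have "\<dots> \<in> borel_measurable borel" by measurable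
  finally show ?thesis .
qed

lemma J_eq: "(\<integral>\<^sup>+s. ennreal (g s) * V (x - s) \<partial>lborel) = (\<integral>\<^sup>+t. indicator {..x} t * ennreal \<bar>u t\<bar> * Gc (x - t) \<partial>lborel)"
proof -
  have "(\<integral>\<^sup>+s. ennreal (g s) * V (x - s) \<partial>lborel)
     = (\<integral>\<^sup>+s. \<integral>\<^sup>+t. indicator {..x} t * ennreal \<bar>u t\<bar> * (if s + t \<le> x then ennreal (g s) else 0) \<partial>lborel \<partial>lborel)"
  proof (intro nn_integral_cong)
    fix s
    show "ennreal (g s) * V (x - s) = (\<integral>\<^sup>+t. indicator {..x} t * ennreal \<bar>u t\<bar> * (if s + t \<le> x then ennreal (g s) else 0) \<partial>lborel)"
    proof (cases "s < 0")
      case True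
      have z: "(if s + t \<le> x then ennreal (g s) else 0) = 0" for t using g_neg[OF True] by simp
      show ?thesis unfolding z using g_neg[OF True] by simp
    next
      case False
      then show ?thesis unfolding V_def
        by (subst nn_integral_cmult[symmetric]) (auto intro!: nn_integral_cong simp: indicator_def mult.commute)
    qed
  qed
  also have "\<dots> = (\<integral>\<^sup>+t. \<integral>\<^sup>+s. indicator {..x} t * ennreal \<bar>u t\<bar> * (if s + t \<le> x then ennreal (g s) else 0) \<partial>lborel \<partial>lborel)"
    by (rule lborel_pair.Fubini') measurable
  also have "\<dots> = (\<integral>\<^sup>+t. indicator {..x} t * ennreal \<bar>u t\<bar> * Gc (x - t) \<partial>lborel)"
    unfolding Gc_def by (intro nn_integral_cong, subst nn_integral_cmult) (auto intro!: arg_cong2[where f="(*)"] nn_integral_cong simp: indicator_def)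
  finally show ?thesis .
qed

definition "I x = (\<integral>\<^sup>+t. indicator {..x} t * ennreal \<bar>u t\<bar> * Gb (x - t) \<partial>lborel)"

lemma overshoot: "Gb x + I x \<le> 1"
proof -
  have "V x + (Gb x + I x) \<le> (Gc x + Gb x) + ((\<integral>\<^sup>+t. indicator {..x} t * ennreal \<bar>u t\<bar> * Gc (x - t) \<partial>lborel) + I x)"
  proof -
    have "V x \<le> Gc x + (\<integral>\<^sup>+t. indicator {..x} t * ennreal \<bar>u t\<bar> * Gc (x - t) \<partial>lborel)"
      using step2[of x] J_eq[of x] unfolding Gc_def by simp
    then show ?thesis by (simp add: add_mono add.assoc add.left_commute)
  qed
  also have "(\<integral>\<^sup>+t. indicator {..x} t * ennreal \<bar>u t\<bar> * Gc (x - t) \<partial>lborel) + I x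
      = (\<integral>\<^sup>+t. indicator {..x} t * ennreal \<bar>u t\<bar> * (Gc (x - t) + Gb (x - t)) \<partial>lborel)"
    unfolding I_def by (subst nn_integral_add[symmetric]) (auto intro!: nn_integral_cong simp: distrib_left)
  also have "\<dots> = ennreal G * V x"
    unfolding V_def Gc_Gb by (subst nn_integral_multc) (auto simp: mult.commute)
  also have "Gc x + Gb x + ennreal G * V x \<le> V x + 1"
  proof -
    have "ennreal G * V x \<le> 1 * V x" using G_lt by (intro mult_right_mono) auto
    moreover have "ennreal G \<le> 1" using G_lt by simp
    ultimately show ?thesis unfolding Gc_Gb by (simp add: add_mono add.commute)
  qed
  finally have "V x + (Gb x + I x) \<le> V x + 1" .
  then show ?thesis using V_fin[of x] by (auto simp: ennreal_add_left_cancel_le)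
qed


definition "hh = 1 / (2 * K)"
lemma hh_pos: "0 < hh" unfolding hh_def using K_pos by simp
lemma Khh: "K * hh = 1/2" unfolding hh_def using K_pos by simp

definition "Q x = (\<integral>\<^sup>+t. indicator {x..x+hh} t * ennreal \<bar>u t\<bar> \<partial>lborel)"

lemma Q_fin: "Q x < \<infinity>"
proof -
  have "Q x \<le> V (x + hh)" unfolding Q_def V_def by (intro nn_integral_mono) (auto simp: indicator_def)
  then show ?thesis using V_fin le_less_trans by blast
qed

lemma Gb_closed: "(\<integral>\<^sup>+w. indicator {y..} w * ennreal (g w) \<partial>lborel) = Gb y"
  unfolding Gb_def
  by (intro nn_integral_cong_AE) (auto intro!: eventually_mono[OF AE_lborel_singleton[of y]] simp: indicator_def)

lemma conv_flip: "(\<integral>\<^sup>+s. ennreal (g s) * ennreal \<bar>u (t - s)\<bar> \<partial>lborel) = (\<integral>\<^sup>+s. ennreal \<bar>u s\<bar> * ennreal (g (t - s)) \<partial>lborel)"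
  using nn_integral_real_affine[where c="-1" and t=t and f="\<lambda>s. ennreal \<bar>u s\<bar> * ennreal (g (t - s))"] by (simp add: mult.commute)

lemma W_bound: "(\<integral>\<^sup>+ w. indicator {x..x+hh} (s + w) * ennreal (g w) \<partial>lborel)
   \<le> indicator {..<x} s * Gb (x - s) + indicator {x..x+hh} s * ennreal (1/2)"
proof (cases "s < x")
  case True
  have "(\<integral>\<^sup>+ w. indicator {x..x+hh} (s + w) * ennreal (g w) \<partial>lborel) \<le> (\<integral>\<^sup>+w. indicator {x-s..} w * ennreal (g w) \<partial>lborel)"
    by (intro nn_integral_mono) (auto simp: indicator_def)
  then show ?thesis using True by (simp add: Gb_closed)
next
  case False
  show ?thesis
  proof (cases "s \<le> x + hh")
    case True
    have "(\<integral>\<^sup>+ w. indicator {x..x+hh} (s + w) * ennreal (g w) \<partial>lborel) \<le> (\<integral>\<^sup>+w. ennreal K * indicator {x-s..x+hh-s} w \<partial>lborel)"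
      by (intro nn_integral_mono) (auto simp: indicator_def g_le ennreal_leI)
    also have "\<dots> = ennreal K * ennreal hh" using hh_pos by (subst nn_integral_cmult_indicator) auto
    also have "\<dots> = ennreal (1/2)" using Khh K_pos hh_pos by (metis ennreal_mult less_imp_le)
    finally show ?thesis using True False by simp
  next
    case False2: False
    have z: "(\<lambda>w. indicator {x..x+hh} (s + w) * ennreal (g w)) = (\<lambda>w. 0)"
    proof
      fix w show "indicator {x..x+hh} (s + w) * ennreal (g w) = 0"
        using False2 g_neg[of w] by (auto simp: indicator_def)
    qed
    have "(\<integral>\<^sup>+ w. indicator {x..x+hh} (s + w) * ennreal (g w) \<partial>lborel) = 0" unfolding z by simp
    then show ?thesis by simp
  qed
qed

lemma Q_bound: "Q x \<le> 2"
proof -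
  have "Q x \<le> (\<integral>\<^sup>+t. indicator {x..x+hh} t * ennreal (g t) + indicator {x..x+hh} t * (\<integral>\<^sup>+s. ennreal (g s) * ennreal \<bar>u (t - s)\<bar> \<partial>lborel) \<partial>lborel)"
    unfolding Q_def
    by (intro nn_integral_mono) (metis distrib_left mult_left_mono step1 zero_le)
  also have "\<dots> = (\<integral>\<^sup>+t. indicator {x..x+hh} t * ennreal (g t) \<partial>lborel) + (\<integral>\<^sup>+t. indicator {x..x+hh} t * (\<integral>\<^sup>+s. ennreal \<bar>u s\<bar> * ennreal (g (t - s)) \<partial>lborel) \<partial>lborel)"
    unfolding conv_flip by (rule nn_integral_add) auto
  also have "(\<integral>\<^sup>+t. indicator {x..x+hh} t * (\<integral>\<^sup>+s. ennreal \<bar>u s\<bar> * ennreal (g (t - s)) \<partial>lborel) \<partial>lborel)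
     = (\<integral>\<^sup>+s. ennreal \<bar>u s\<bar> * (\<integral>\<^sup>+ w. indicator {x..x+hh} (s + w) * ennreal (g w) \<partial>lborel) \<partial>lborel)"
    using conv_swap[of "\<lambda>s. \<bar>u s\<bar>" g "{x..x+hh}"] by simp
  also have "\<dots> \<le> (\<integral>\<^sup>+s. indicator {..x} s * ennreal \<bar>u s\<bar> * Gb (x - s) + ennreal (1/2) * (indicator {x..x+hh} s * ennreal \<bar>u s\<bar>) \<partial>lborel)"
  proof (intro nn_integral_mono)
    fix s
    have "ennreal \<bar>u s\<bar> * (\<integral>\<^sup>+ w. indicator {x..x+hh} (s + w) * ennreal (g w) \<partial>lborel)
       \<le> ennreal \<bar>u s\<bar> * (indicator {..<x} s * Gb (x - s) + indicator {x..x+hh} s * ennreal (1/2))"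
      by (intro mult_left_mono W_bound) auto
    also have "\<dots> \<le> indicator {..x} s * ennreal \<bar>u s\<bar> * Gb (x - s) + ennreal (1/2) * (indicator {x..x+hh} s * ennreal \<bar>u s\<bar>)"
      by (auto simp: indicator_def distrib_left mult_ac)
    finally show "ennreal \<bar>u s\<bar> * (\<integral>\<^sup>+ w. indicator {x..x+hh} (s + w) * ennreal (g w) \<partial>lborel) \<le> indicator {..x} s * ennreal \<bar>u s\<bar> * Gb (x - s) + ennreal (1/2) * (indicator {x..x+hh} s * ennreal \<bar>u s\<bar>)" .
  qed
  also have "\<dots> = I x + ennreal (1/2) * Q x"
    unfolding I_def Q_def by (subst nn_integral_add) (auto simp: nn_integral_cmult)
  finally have "Q x \<le> (\<integral>\<^sup>+t. indicator {x..x+hh} t * ennreal (g t) \<partial>lborel) + (I x + ennreal (1/2) * Q x)"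
    by (simp add: add_mono)
  moreover have "(\<integral>\<^sup>+t. indicator {x..x+hh} t * ennreal (g t) \<partial>lborel) \<le> Gb x"
    unfolding Gb_closed[symmetric] by (intro nn_integral_mono) (auto simp: indicator_def)
  ultimately have "Q x \<le> (Gb x + I x) + ennreal (1/2) * Q x"
    by (metis (no_types, lifting) add.assoc add_right_mono order_trans)
  also have "\<dots> \<le> 1 + ennreal (1/2) * Q x" using overshoot by (simp add: add_right_mono)
  finally have qq: "Q x \<le> 1 + ennreal (1/2) * Q x" .
  obtain q where q: "Q x = ennreal q" "0 \<le> q" using Q_fin[of x]
    by (cases "Q x") (auto simp: less_top ennreal_cases)
  have e: "ennreal (1 + 1/2 * q) = 1 + ennreal (1/2) * ennreal q" using q
  proof -
    have a: "ennreal (1 + 1/2*q) = ennreal 1 + ennreal (1/2*q)" using q by (intro ennreal_plus) auto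
    have b: "ennreal (1/2 * q) = ennreal (1/2) * ennreal q" using q by (intro ennreal_mult) auto
    show ?thesis unfolding a b by simp
  qed
  have "ennreal q \<le> ennreal (1 + 1/2 * q)" using qq q unfolding e by simp
  moreover have "0 \<le> 1 + 1/2 * q" using q by simp
  ultimately have "q \<le> 1 + 1/2 * q" using ennreal_le_iff by blast
  then have "q \<le> 2" by simp
  then have "ennreal q \<le> ennreal 2" by (rule ennreal_leI)
  then show ?thesis using q by simp
qed


definition "gK w = (if w < 0 then K else g w)"
lemma gK_meas[measurable]: "gK \<in> borel_measurable borel" unfolding gK_def by measurable

lemma g_avg: "ennreal (g s) \<le> ennreal (1/hh) * (\<integral>\<^sup>+ w. (if w \<le> s \<and> s \<le> w + hh \<and> -hh \<le> w then ennreal (gK w) else 0) \<partial>lborel)"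
proof (cases "s < 0")
  case True then show ?thesis by (simp add: g_neg)
next
  case False
  have "ennreal (g s) * ennreal hh = (\<integral>\<^sup>+ w. ennreal (g s) * indicator {s-hh..s} w \<partial>lborel)"
    using hh_pos by (subst nn_integral_cmult_indicator) auto
  also have "\<dots> \<le> (\<integral>\<^sup>+ w. (if w \<le> s \<and> s \<le> w + hh \<and> -hh \<le> w then ennreal (gK w) else 0) \<partial>lborel)"
  proof (intro nn_integral_mono)
    fix w
    show "ennreal (g s) * indicator {s-hh..s} w \<le> (if w \<le> s \<and> s \<le> w + hh \<and> -hh \<le> w then ennreal (gK w) else 0)"
      using False g_anti[of w s] g_le[of s]
      by (auto simp: indicator_def gK_def ennreal_leI)
  qed
  finally have a: "ennreal (g s) * ennreal hh \<le> (\<integral>\<^sup>+ w. (if w \<le> s \<and> s \<le> w + hh \<and> -hh \<le> w then ennreal (gK w) else 0) \<partial>lborel)" .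
  have "ennreal (g s) = ennreal (1/hh) * (ennreal (g s) * ennreal hh)"
    using hh_pos g_nonneg[of s] by (simp add: ennreal_mult[symmetric])
  also have "\<dots> \<le> ennreal (1/hh) * (\<integral>\<^sup>+ w. (if w \<le> s \<and> s \<le> w + hh \<and> -hh \<le> w then ennreal (gK w) else 0) \<partial>lborel)"
    by (intro mult_left_mono a) auto
  finally show ?thesis .
qed

lemma gK_int: "(\<integral>\<^sup>+ w. indicator {-hh..} w * ennreal (gK w) \<partial>lborel) \<le> ennreal (K * hh + G)"
proof -
  have "(\<integral>\<^sup>+ w. indicator {-hh..} w * ennreal (gK w) \<partial>lborel) \<le> (\<integral>\<^sup>+ w. ennreal K * indicator {-hh..0} w + ennreal (g w) \<partial>lborel)"
    by (intro nn_integral_mono) (auto simp: indicator_def gK_def g_neg)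
  also have "\<dots> = ennreal K * ennreal hh + ennreal G"
    using hh_pos by (subst nn_integral_add) (auto simp: g_int nn_integral_cmult_indicator)
  also have "\<dots> = ennreal (K * hh + G)" using hh_pos K_pos G_nn by (simp add: ennreal_mult ennreal_plus)
  finally show ?thesis .
qed

lemma sup_bound: "\<bar>u t\<bar> \<le> 7 * K"
proof -
  have "(\<integral>\<^sup>+s. ennreal (g s) * ennreal \<bar>u (t - s)\<bar> \<partial>lborel)
     \<le> (\<integral>\<^sup>+s. ennreal (1/hh) * (\<integral>\<^sup>+ w. (if w \<le> s \<and> s \<le> w + hh \<and> -hh \<le> w then ennreal (gK w) else 0) \<partial>lborel) * ennreal \<bar>u (t - s)\<bar> \<partial>lborel)"
    by (intro nn_integral_mono mult_right_mono g_avg) auto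
  also have "\<dots> = ennreal (1/hh) * (\<integral>\<^sup>+s. \<integral>\<^sup>+ w. (if w \<le> s \<and> s \<le> w + hh \<and> -hh \<le> w then ennreal (gK w) else 0) * ennreal \<bar>u (t - s)\<bar> \<partial>lborel \<partial>lborel)"
    by (subst nn_integral_cmult[symmetric]) (auto intro!: nn_integral_cong simp: nn_integral_multc mult.assoc)
  also have "(\<integral>\<^sup>+s. \<integral>\<^sup>+ w. (if w \<le> s \<and> s \<le> w + hh \<and> -hh \<le> w then ennreal (gK w) else 0) * ennreal \<bar>u (t - s)\<bar> \<partial>lborel \<partial>lborel)
    = (\<integral>\<^sup>+w. \<integral>\<^sup>+ s. (if w \<le> s \<and> s \<le> w + hh \<and> -hh \<le> w then ennreal (gK w) else 0) * ennreal \<bar>u (t - s)\<bar> \<partial>lborel \<partial>lborel)"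
    by (rule lborel_pair.Fubini') measurable
  also have "\<dots> = (\<integral>\<^sup>+w. indicator {-hh..} w * ennreal (gK w) * Q (t - w - hh) \<partial>lborel)"
  proof (intro nn_integral_cong)
    fix w
    have "(\<integral>\<^sup>+ s. (if w \<le> s \<and> s \<le> w + hh \<and> -hh \<le> w then ennreal (gK w) else 0) * ennreal \<bar>u (t - s)\<bar> \<partial>lborel)
      = (\<integral>\<^sup>+ s. indicator {-hh..} w * ennreal (gK w) * (indicator {w..w+hh} s * ennreal \<bar>u (t - s)\<bar>) \<partial>lborel)"
      by (intro nn_integral_cong) (auto simp: indicator_def)
    also have "\<dots> = indicator {-hh..} w * ennreal (gK w) * (\<integral>\<^sup>+ s. indicator {w..w+hh} s * ennreal \<bar>u (t - s)\<bar> \<partial>lborel)"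
      by (rule nn_integral_cmult) auto
    also have "(\<integral>\<^sup>+ s. indicator {w..w+hh} s * ennreal \<bar>u (t - s)\<bar> \<partial>lborel) = Q (t - w - hh)"
    proof -
      have "(\<integral>\<^sup>+ s. indicator {w..w+hh} s * ennreal \<bar>u (t - s)\<bar> \<partial>lborel)
         = (\<integral>\<^sup>+ y. indicator {w..w+hh} (t - y) * ennreal \<bar>u y\<bar> \<partial>lborel)"
        using nn_integral_real_affine[where c="-1" and t=t and f="\<lambda>s. indicator {w..w+hh} s * ennreal \<bar>u (t - s)\<bar>"] by simp
      also have "\<dots> = Q (t - w - hh)" unfolding Q_def
        by (intro nn_integral_cong) (auto simp: indicator_def)
      finally show ?thesis .
    qed
    finally show "(\<integral>\<^sup>+ s. (if w \<le> s \<and> s \<le> w + hh \<and> -hh \<le> w then ennreal (gK w) else 0) * ennreal \<bar>u (t - s)\<bar> \<partial>lborel)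
       = indicator {-hh..} w * ennreal (gK w) * Q (t - w - hh)" .
  qed
  also have "\<dots> \<le> (\<integral>\<^sup>+w. indicator {-hh..} w * ennreal (gK w) * 2 \<partial>lborel)"
    by (intro nn_integral_mono mult_left_mono Q_bound) auto
  also have "\<dots> = (\<integral>\<^sup>+w. indicator {-hh..} w * ennreal (gK w) \<partial>lborel) * 2"
    by (rule nn_integral_multc) auto
  also have "\<dots> \<le> ennreal (K * hh + G) * 2" by (intro mult_right_mono gK_int) auto
  finally have c: "(\<integral>\<^sup>+s. ennreal (g s) * ennreal \<bar>u (t - s)\<bar> \<partial>lborel) \<le> ennreal (1/hh) * (ennreal (K * hh + G) * 2)"
    by (simp add: mult_left_mono)
  have e1: "ennreal ((K*hh+G)*2) = ennreal (K*hh+G) * ennreal 2"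
    using hh_pos K_pos G_nn by (intro ennreal_mult) auto
  have e2: "ennreal ((1/hh)*((K*hh+G)*2)) = ennreal (1/hh) * ennreal ((K*hh+G)*2)"
    using hh_pos K_pos G_nn by (intro ennreal_mult) auto
  have "ennreal (1/hh) * (ennreal (K * hh + G) * 2) = ennreal (2 * (K * hh + G) / hh)"
    using e1 e2 by (simp add: mult_ac)
  also have "2 * (K * hh + G) / hh = 2 * K + 4 * G * K" using hh_pos K_pos unfolding hh_def by (simp add: field_simps)
  finally have c2: "(\<integral>\<^sup>+s. ennreal (g s) * ennreal \<bar>u (t - s)\<bar> \<partial>lborel) \<le> ennreal (2 * K + 4 * G * K)" using c by simp
  have "ennreal \<bar>u t\<bar> \<le> ennreal (g t) + ennreal (2 * K + 4 * G * K)"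
    using step1[of t] c2 by (meson add_left_mono order_trans)
  also have "\<dots> = ennreal (g t + (2 * K + 4 * G * K))" using g_nonneg[of t] K_pos G_nn by (simp add: ennreal_plus)
  finally have "\<bar>u t\<bar> \<le> g t + (2 * K + 4 * G * K)"
    using g_nonneg[of t] K_pos G_nn by (subst (asm) ennreal_le_iff) auto
  moreover have "4 * G * K \<le> 4 * K" using G_lt K_pos by simp
  ultimately show ?thesis using g_le[of t] by linarith
qed


lemma g_integrable: "integrable lborel g"
  using g_int g_nonneg by (intro integrableI_bounded) auto

lemma g_integral: "(\<integral>x. g x \<partial>lborel) = G"
proof -
  have "ennreal G = ennreal (\<integral>x. g x \<partial>lborel)"
    using nn_integral_eq_integral[OF g_integrable] g_int g_nonneg by simp
  moreover have "0 \<le> (\<integral>x. g x \<partial>lborel)" by (intro integral_nonneg_AE) (simp add: g_nonneg)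
  ultimately show ?thesis using G_nn by simp
qed

lemma u_integral: "(\<integral>x. u x \<partial>lborel) = G / (1 - G)"
proof -
  have L: "(\<integral>\<^sup>+t. ennreal \<bar>u t\<bar> \<partial>lborel) < \<infinity>" using L1 by (auto intro: le_less_trans[OF _ ennreal_less_top])
  have int2: "integrable (lborel \<Otimes>\<^sub>M lborel) (\<lambda>(t, s). g s * u (t - s))"
  proof (intro integrableI_bounded)
    show "(\<lambda>(t, s). g s * u (t - s)) \<in> borel_measurable (lborel \<Otimes>\<^sub>M lborel)" by measurable
    have "(\<integral>\<^sup>+ z. ennreal (norm ((\<lambda>(t, s). g s * u (t - s)) z)) \<partial>(lborel \<Otimes>\<^sub>M lborel))
       = (\<integral>\<^sup>+ t. \<integral>\<^sup>+ s. ennreal (norm (g s * u (t - s))) \<partial>lborel \<partial>lborel)"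
    proof -
      have m: "(\<lambda>z. ennreal (norm ((\<lambda>(t, s). g s * u (t - s)) z))) \<in> borel_measurable (lborel \<Otimes>\<^sub>M lborel)" by measurable
      show ?thesis using lborel.nn_integral_fst[OF m] by simp
    qed
    also have "\<dots> = (\<integral>\<^sup>+ t. indicator UNIV t * \<integral>\<^sup>+ s. ennreal (g s) * ennreal \<bar>u (t - s)\<bar> \<partial>lborel \<partial>lborel)"
      by (intro nn_integral_cong) (auto simp: abs_mult g_nonneg ennreal_mult)
    also have "\<dots> = (\<integral>\<^sup>+ s. ennreal (g s) * (\<integral>\<^sup>+ w. indicator UNIV (s + w) * ennreal \<bar>u w\<bar> \<partial>lborel) \<partial>lborel)"
      by (rule conv_swap) auto
    also have "\<dots> = ennreal G * (\<integral>\<^sup>+ w. ennreal \<bar>u w\<bar> \<partial>lborel)"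
      by (simp add: nn_integral_multc g_int)
    also have "\<dots> < \<infinity>" using L by (simp add: ennreal_mult_less_top)
    finally show "(\<integral>\<^sup>+ z. ennreal (norm ((\<lambda>(t, s). g s * u (t - s)) z)) \<partial>(lborel \<Otimes>\<^sub>M lborel)) < \<infinity>" .
  qed
  have F: "(\<integral>s. (\<integral>t. g s * u (t - s) \<partial>lborel) \<partial>lborel) = (\<integral>t. (\<integral>s. g s * u (t - s) \<partial>lborel) \<partial>lborel)"
    using lborel_pair.Fubini_integral[of "\<lambda>t s. g s * u (t - s)"] int2 by simp
  have inner: "(\<integral>t. g s * u (t - s) \<partial>lborel) = g s * (\<integral>x. u x \<partial>lborel)" for s
  proof -
    have "(\<integral>x. u x \<partial>lborel) = (\<integral>x. u (- s + 1 * x) \<partial>lborel)"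
      using lborel_integral_real_affine[of 1 u "-s"] by simp
    then show ?thesis by simp
  qed
  have "(\<integral>t. (\<integral>s. g s * u (t - s) \<partial>lborel) \<partial>lborel) = (\<integral>t. u t - g t \<partial>lborel)"
  proof (rule Bochner_Integration.integral_cong[OF refl])
    fix t show "(\<integral>s. g s * u (t - s) \<partial>lborel) = u t - g t" using u_eq[of t] by linarith
  qed
  also have "\<dots> = (\<integral>x. u x \<partial>lborel) - G"
    using u_int g_integrable g_integral by simp
  finally have a: "(\<integral>t. (\<integral>s. g s * u (t - s) \<partial>lborel) \<partial>lborel) = (\<integral>x. u x \<partial>lborel) - G" .
  have "(\<integral>s. (\<integral>t. g s * u (t - s) \<partial>lborel) \<partial>lborel) = (\<integral>s. g s * (\<integral>x. u x \<partial>lborel) \<partial>lborel)"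
    by (simp only: inner)
  also have "\<dots> = G * (\<integral>x. u x \<partial>lborel)" using g_integral by simp
  finally have "(\<integral>x. u x \<partial>lborel) - G = G * (\<integral>x. u x \<partial>lborel)"
    using F a by simp
  then show ?thesis using G_lt by (simp add: field_simps)
qed

end



lemma layer_cake:
  fixes M :: "real measure" and h :: "real \<Rightarrow> real"
  assumes P: "prob_space M" and Ms: "sets M = sets borel"
  and hm[measurable]: "h \<in> borel_measurable borel" and hn: "\<And>t. 0 \<le> h t"
  shows "(\<integral>\<^sup>+ t. indicator {0..} t * ennreal (h t) * ennreal (tail M t) \<partial>lborel)
       = (\<integral>\<^sup>+ y. (\<integral>\<^sup>+ t. ennreal (if 0 \<le> t \<and> t < y then h t else 0) \<partial>lborel) \<partial>M)"
proof -
  interpret prob_space M by (rule P)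
  interpret pair_sigma_finite lborel M proof qed
  have meas_eq: "measurable (lborel \<Otimes>\<^sub>M M) borel = measurable (borel \<Otimes>\<^sub>M borel) borel"
    by (intro measurable_cong_sets sets_pair_measure_cong) (auto simp: Ms)
  have tl: "ennreal (tail M t) = (\<integral>\<^sup>+ y. indicator {t<..} y \<partial>M)" for t
  proof -
    have "{t<..} \<in> sets M" using Ms by simp
    then show ?thesis unfolding tail_def by (simp add: emeasure_eq_measure)
  qed
  have "(\<integral>\<^sup>+ t. indicator {0..} t * ennreal (h t) * ennreal (tail M t) \<partial>lborel)
     = (\<integral>\<^sup>+ t. \<integral>\<^sup>+ y. ennreal (if 0 \<le> t \<and> t < y then h t else 0) \<partial>M \<partial>lborel)"
  proof (intro nn_integral_cong)
    fix t
    show "indicator {0..} t * ennreal (h t) * ennreal (tail M t) = (\<integral>\<^sup>+ y. ennreal (if 0 \<le> t \<and> t < y then h t else 0) \<partial>M)"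
      unfolding tl using Ms by (subst nn_integral_cmult[symmetric]) (auto intro!: nn_integral_cong borel_measurable_indicator simp: indicator_def)
  qed
  also have "\<dots> = (\<integral>\<^sup>+ y. \<integral>\<^sup>+ t. ennreal (if 0 \<le> t \<and> t < y then h t else 0) \<partial>lborel \<partial>M)"
  proof (rule Fubini'[symmetric])
    have "(\<lambda>(t, y). ennreal (if 0 \<le> t \<and> t < y then h t else 0)) \<in> borel_measurable (borel \<Otimes>\<^sub>M borel)"
      by measurable
    then show "(\<lambda>(t, y). ennreal (if 0 \<le> t \<and> t < y then h t else 0)) \<in> borel_measurable (lborel \<Otimes>\<^sub>M M)"
      by (metis (no_types, lifting) measurable_cong_sets sets_lborel sets_pair_measure_cong Ms)
  qed
  finally show ?thesis .
qed


lemma inner_one: "(\<integral>\<^sup>+ t. ennreal (if 0 \<le> t \<and> t < y then 1 else 0) \<partial>lborel) = ennreal y"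
proof (cases "0 \<le> y")
  case True
  have "(\<integral>\<^sup>+ t. ennreal (if 0 \<le> t \<and> t < y then 1 else 0) \<partial>lborel) = (\<integral>\<^sup>+ t. indicator {0..<y} t \<partial>lborel)"
    by (intro nn_integral_cong) (auto simp: indicator_def)
  then show ?thesis using True by simp
next
  case False
  then have "(\<lambda>t. ennreal (if 0 \<le> t \<and> t < y then 1 else 0)) = (\<lambda>t. 0)" by (auto intro!: ext)
  then show ?thesis using False by (simp add: ennreal_neg)
qed

lemma inner_id: "0 \<le> y \<Longrightarrow> (\<integral>\<^sup>+ t. ennreal (if 0 \<le> t \<and> t < y then t else 0) \<partial>lborel) = ennreal (y^2 / 2)"
proof -
  assume y: "0 \<le> y"
  have hi: "((\<lambda>t. t) has_integral (y^2/2 - 0^2/2)) {0..y}"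
    using y by (intro fundamental_theorem_of_calculus) (auto intro!: derivative_eq_intros simp: has_real_derivative_iff_has_vector_derivative[symmetric])
  have "(\<integral>\<^sup>+ t. ennreal (if 0 \<le> t \<and> t < y then t else 0) \<partial>lborel) = (\<integral>\<^sup>+ t. ennreal (indicator {0..y} t * t) \<partial>lborel)"
    by (intro nn_integral_cong_AE) (auto intro!: eventually_mono[OF AE_lborel_singleton[of y]] simp: indicator_def)
  also have "\<dots> = ennreal (y^2/2)"
    using nn_integral_has_integral_lebesgue[OF _ hi] by (simp add: ennreal_mult' ennreal_indicator)
  finally show ?thesis .
qed

lemma inner_pow_le: "(\<integral>\<^sup>+ t. ennreal (if 0 \<le> t \<and> t < y then t powr a else 0) \<partial>lborel) \<le> ennreal (y * (max 0 y) powr a)"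
  if "0 \<le> a" for a y :: real
proof (cases "0 \<le> y")
  case True
  have "(\<integral>\<^sup>+ t. ennreal (if 0 \<le> t \<and> t < y then t powr a else 0) \<partial>lborel) \<le> (\<integral>\<^sup>+ t. ennreal (y powr a) * indicator {0..<y} t \<partial>lborel)"
    using that by (intro nn_integral_mono) (auto simp: indicator_def intro!: ennreal_leI powr_mono2)
  also have "\<dots> = ennreal (y * y powr a)" using True
    by (subst nn_integral_cmult_indicator) (auto simp: ennreal_mult mult.commute)
  finally show ?thesis using True by simp
next
  case False
  then have "(\<lambda>t. ennreal (if 0 \<le> t \<and> t < y then t powr a else 0)) = (\<lambda>t. 0)" by (auto intro!: ext)
  then show ?thesis by simp
qed

context
  fixes M :: "real measure"
  assumes P: "prob_space M" and Ms: "sets M = sets borel" and supp: "measure M {0..} = 1"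
begin

lemma AE_nonneg: "AE y in M. 0 \<le> y"
proof -
  interpret prob_space M by (rule P)
  show ?thesis using AE_prob_1[OF supp] by (auto elim: eventually_mono)
qed

lemma tail_nonneg: "0 \<le> tail M t" unfolding tail_def by simp
lemma tail_le1: "tail M t \<le> 1"
proof -
  interpret prob_space M by (rule P)
  show ?thesis unfolding tail_def by simp
qed
lemma tail_anti: "s \<le> t \<Longrightarrow> tail M t \<le> tail M s"
proof -
  interpret prob_space M by (rule P)
  assume "s \<le> t"
  then show ?thesis unfolding tail_def using Ms by (intro finite_measure_mono) auto
qed
lemma tail_meas: "tail M \<in> borel_measurable borel"
proof -
  have "mono (\<lambda>t. - tail M t)" by (auto simp: mono_def intro: tail_anti)
  then have "(\<lambda>t. - tail M t) \<in> borel_measurable borel" by (rule borel_measurable_mono)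
  then have "(\<lambda>t. - (- tail M t)) \<in> borel_measurable borel" by measurable
  then show ?thesis by simp
qed

lemma eta_layer:
  assumes "integrable M (\<lambda>y. y)"
  shows "(\<integral>\<^sup>+ t. indicator {0..} t * ennreal (tail M t) \<partial>lborel) = ennreal (\<integral>y. y \<partial>M)"
proof -
  have "(\<integral>\<^sup>+ t. indicator {0..} t * ennreal (tail M t) \<partial>lborel) = (\<integral>\<^sup>+ t. indicator {0..} t * ennreal 1 * ennreal (tail M t) \<partial>lborel)"
    by simp
  also have "\<dots> = (\<integral>\<^sup>+ y. ennreal y \<partial>M)"
    using layer_cake[OF P Ms, of "\<lambda>_. 1"] inner_one by simp
  also have "\<dots> = ennreal (\<integral>y. y \<partial>M)"
    by (rule nn_integral_eq_integral[OF assms AE_nonneg])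
  finally show ?thesis .
qed

lemma sigma_layer:
  assumes "integrable M (\<lambda>y. y^2)"
  shows "(\<integral>\<^sup>+ t. indicator {0..} t * ennreal t * ennreal (tail M t) \<partial>lborel) = ennreal ((1/2) * \<integral>y. y^2 \<partial>M)"
proof -
  have "(\<integral>\<^sup>+ t. indicator {0..} t * ennreal t * ennreal (tail M t) \<partial>lborel) = (\<integral>\<^sup>+ y. (\<integral>\<^sup>+ t. ennreal (if 0 \<le> t \<and> t < y then t else 0) \<partial>lborel) \<partial>M)"
  proof -
    have "(\<integral>\<^sup>+ t. indicator {0..} t * ennreal t * ennreal (tail M t) \<partial>lborel) = (\<integral>\<^sup>+ t. indicator {0..} t * ennreal (max 0 t) * ennreal (tail M t) \<partial>lborel)"
      by (intro nn_integral_cong) (auto simp: indicator_def max_def)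
    also have "\<dots> = (\<integral>\<^sup>+ y. (\<integral>\<^sup>+ t. ennreal (if 0 \<le> t \<and> t < y then max 0 t else 0) \<partial>lborel) \<partial>M)"
      by (rule layer_cake[OF P Ms]) auto
    also have "\<dots> = (\<integral>\<^sup>+ y. (\<integral>\<^sup>+ t. ennreal (if 0 \<le> t \<and> t < y then t else 0) \<partial>lborel) \<partial>M)"
      by (intro nn_integral_cong) (auto intro!: nn_integral_cong simp: max_def)
    finally show ?thesis .
  qed
  also have "\<dots> = (\<integral>\<^sup>+ y. ennreal (y^2/2) \<partial>M)"
    by (intro nn_integral_cong_AE) (auto intro!: eventually_mono[OF AE_nonneg] simp: inner_id)
  also have "\<dots> = ennreal (\<integral>y. y^2/2 \<partial>M)"
    using assms by (intro nn_integral_eq_integral) auto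
  finally show ?thesis by simp
qed

lemma pow_layer_bound:
  assumes a: "1 \<le> a"
  shows "(\<integral>\<^sup>+ t. indicator {0..} t * ennreal (t powr a) * ennreal (tail M t) \<partial>lborel) \<le> (\<integral>\<^sup>+ y. ennreal (1 + \<bar>y\<bar> powr (2 * a)) \<partial>M)"
proof -
  have "(\<integral>\<^sup>+ t. indicator {0..} t * ennreal (t powr a) * ennreal (tail M t) \<partial>lborel)
     = (\<integral>\<^sup>+ y. (\<integral>\<^sup>+ t. ennreal (if 0 \<le> t \<and> t < y then t powr a else 0) \<partial>lborel) \<partial>M)"
    by (rule layer_cake[OF P Ms]) auto
  also have "\<dots> \<le> (\<integral>\<^sup>+ y. ennreal (y * (max 0 y) powr a) \<partial>M)"
    using a by (intro nn_integral_mono inner_pow_le) auto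
  also have "\<dots> \<le> (\<integral>\<^sup>+ y. ennreal (1 + \<bar>y\<bar> powr (2 * a)) \<partial>M)"
  proof (intro nn_integral_mono ennreal_leI)
    fix y :: real
    show "y * (max 0 y) powr a \<le> 1 + \<bar>y\<bar> powr (2 * a)"
    proof (cases "y \<le> 1")
      case True
      show ?thesis
      proof (cases "0 \<le> y")
        case True2: True
        have "y powr a \<le> 1" using True True2 a by (simp add: powr_le1)
        then have "y * y powr a \<le> 1" using True True2 by (metis mult_le_one powr_ge_zero)
        moreover have "0 \<le> \<bar>y\<bar> powr (2 * a)" by simp
        moreover have "y * (max 0 y) powr a = y * y powr a" using True2 by simp
        ultimately show ?thesis by linarith
      next
        case False then show ?thesis by (simp add: mult_nonpos_nonneg)
      qed
    next
      case False
      then have "y * y powr a = y powr (a + 1)" by (simp add: powr_add)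
      also have "\<dots> \<le> y powr (2 * a)" using False a by (intro powr_mono) auto
      finally show ?thesis using False by simp
    qed
  qed
  finally show ?thesis .
qed

end




lemma instance_lemma:
  fixes M :: "real measure" and c ga \<beta> :: real and R :: "real \<Rightarrow> real"
  assumes P: "prob_space M" and Ms: "sets M = sets borel" and supp: "measure M {0..} = 1"
    and int1: "integrable M (\<lambda>y. y)"
    and c: "0 < c" and ga: "0 < ga" and beta: "0 \<le> \<beta>"
    and R_loc: "\<And>T. T \<ge> 0 \<Longrightarrow> set_integrable lborel {0..T} R"
    and R_eq: "\<And>t. t \<ge> 0 \<Longrightarrow> R t = c * tail M t + c * (LINT s:{0..t}|lborel. R (t - s) * tail M s)"
    and G_lt: "c * enn2real (\<integral>\<^sup>+ t. indicator {0..} t * ennreal (exp (- \<beta> * t / ga)) * ennreal (tail M t) \<partial>lborel) < 1"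
  defines "G \<equiv> c * enn2real (\<integral>\<^sup>+ t. indicator {0..} t * ennreal (exp (- \<beta> * t / ga)) * ennreal (tail M t) \<partial>lborel)"
  shows "set_integrable lborel {0..} (\<lambda>t. exp (- \<beta> * (ga * t) / ga) * R (ga * t))"
    and "(LINT t:{0..}|lborel. exp (- \<beta> * (ga * t) / ga) * R (ga * t)) = G / (1 - G) / ga"
    and "\<And>\<kappa>. \<kappa> \<ge> 1 \<Longrightarrow> (\<integral>\<^sup>+ t. ennreal (\<bar>exp (- \<beta> * (ga * t) / ga) * R (ga * t)\<bar> powr \<kappa> * indicator {0..} t) \<partial>lborel)
        \<le> ennreal ((7 * c) powr (\<kappa> - 1) * (G / (1 - G) / ga))"
proof -
  have exp_le1: "exp (- \<beta> * t / ga) \<le> 1" if "0 \<le> t" for t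
    using that beta ga by (simp add: divide_nonpos_pos mult_nonneg_nonneg)
  have tm[measurable]: "tail M \<in> borel_measurable borel" by (rule tail_meas[OF P Ms supp])
  note tn = tail_nonneg[OF P Ms supp] and t1 = tail_le1[OF P Ms supp]
  define A where "A = (\<integral>\<^sup>+ t. indicator {0..} t * ennreal (exp (- \<beta> * t / ga)) * ennreal (tail M t) \<partial>lborel)"
  have Afin: "A \<le> ennreal (\<integral>y. y \<partial>M)"
  proof -
    have "A \<le> (\<integral>\<^sup>+ t. indicator {0..} t * ennreal (tail M t) \<partial>lborel)"
      unfolding A_def
    proof (intro nn_integral_mono)
      fix t
      show "indicator {0..} t * ennreal (exp (- \<beta> * t / ga)) * ennreal (tail M t) \<le> indicator {0..} t * ennreal (tail M t)"
      proof (cases "0 \<le> t")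
        case True
        have "ennreal (exp (- \<beta> * t / ga)) \<le> 1" using exp_le1[OF True] by (simp add: ennreal_leI)
        then have "ennreal (exp (- \<beta> * t / ga)) * ennreal (tail M t) \<le> 1 * ennreal (tail M t)"
          by (rule mult_right_mono) simp
        then show ?thesis using True by simp
      qed simp
    qed
    then show ?thesis using eta_layer[OF P Ms supp int1] by simp
  qed
  then have A_eq: "A = ennreal (enn2real A)" by (simp add: ennreal_enn2real_if top_unique) (metis ennreal_neq_top top_unique)
  have G_def': "G = c * enn2real A" unfolding G_def A_def ..
  define g where "g t = (if 0 \<le> t then exp (- \<beta> * t / ga) * (c * tail M t) else 0)" for t
  define u where "u t = (if 0 \<le> t then exp (- \<beta> * t / ga) * R t else 0)" for t
  have Rm: "(\<lambda>t. indicator {0..T} t * R t) \<in> borel_measurable borel" if "T \<ge> 0" for T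
    using borel_measurable_integrable[OF R_loc[OF that, unfolded set_integrable_def]] by simp
  have um: "u \<in> borel_measurable borel"
  proof (rule borel_measurable_LIMSEQ_real[where u="\<lambda>i t. exp (- \<beta> * t / ga) * (indicator {0..real i} t * R t)"])
    fix t :: real
    show "(\<lambda>i. exp (- \<beta> * t / ga) * (indicator {0..real i} t * R t)) \<longlonglongrightarrow> u t"
    proof (cases "0 \<le> t")
      case False then show ?thesis by (simp add: u_def indicator_def)
    next
      case True
      obtain N where N: "t \<le> real N" using real_arch_simple by blast
      have "\<forall>\<^sub>F i in sequentially. exp (- \<beta> * t / ga) * (indicator {0..real i} t * R t) = u t"
        using N True by (auto simp: eventually_sequentially u_def indicator_def intro!: exI[of _ N])
      then show ?thesis by (rule tendsto_eventually)
    qed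
  next
    fix i :: nat show "(\<lambda>t. exp (- \<beta> * t / ga) * (indicator {0..real i} t * R t)) \<in> borel_measurable borel"
      using Rm[of "real i"] by measurable
  qed
  have gm: "g \<in> borel_measurable borel" unfolding g_def using tail_meas[OF P Ms supp] by measurable
  interpret renew g u c G
  proof
    show "g \<in> borel_measurable borel" by (rule gm)
    show "u \<in> borel_measurable borel" by (rule um)
    show "0 \<le> g x" for x unfolding g_def using c tail_nonneg[OF P Ms supp] by simp
    show "g x \<le> c" for x
    proof (cases "0 \<le> x")
      case True
      have "exp (- \<beta> * x / ga) * (c * tail M x) \<le> 1 * (c * 1)"
        using exp_le1[OF True] tn[of x] t1[of x] c by (intro mult_mono) auto
      then show ?thesis using True unfolding g_def by simp
    qed (use c in \<open>simp add: g_def\<close>)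
    show "x < 0 \<Longrightarrow> g x = 0" for x unfolding g_def by simp
    show "g y \<le> g x" if "0 \<le> x" "x \<le> y" for x y
    proof -
      have "exp (- \<beta> * y / ga) \<le> exp (- \<beta> * x / ga)" using that beta ga
        by (simp add: divide_right_mono mult_left_mono)
      moreover have "c * tail M y \<le> c * tail M x" using tail_anti[OF P Ms supp that(2)] c by simp
      ultimately have "exp (- \<beta> * y / ga) * (c * tail M y) \<le> exp (- \<beta> * x / ga) * (c * tail M x)"
        using c tn by (intro mult_mono) auto
      then show ?thesis using that unfolding g_def by simp
    qed
    have "(\<integral>\<^sup>+x. ennreal (g x) \<partial>lborel) = (\<integral>\<^sup>+x. ennreal c * (indicator {0..} x * ennreal (exp (- \<beta> * x / ga)) * ennreal (tail M x)) \<partial>lborel)"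
      unfolding g_def using c tn by (intro nn_integral_cong) (auto simp: indicator_def ennreal_mult mult_ac)
    also have "\<dots> = ennreal c * A" unfolding A_def by (intro nn_integral_cmult) measurable
    also have "\<dots> = ennreal G" unfolding G_def' using c by (subst A_eq) (simp add: ennreal_mult)
    finally show "(\<integral>\<^sup>+x. ennreal (g x) \<partial>lborel) = ennreal G" .
    show "G < 1" using G_lt unfolding G_def .
    show "0 \<le> G" unfolding G_def' using c by simp
    show "0 < c" by (rule c)
    show "x < 0 \<Longrightarrow> u x = 0" for x unfolding u_def by simp
    show "(\<integral>\<^sup>+t. indicator {..x} t * ennreal \<bar>u t\<bar> \<partial>lborel) < \<infinity>" for x
    proof -
      have "(\<integral>\<^sup>+t. indicator {..x} t * ennreal \<bar>u t\<bar> \<partial>lborel) \<le> (\<integral>\<^sup>+t. ennreal (norm (indicator {0..max 0 x} t *\<^sub>R R t)) \<partial>lborel)"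
      proof (intro nn_integral_mono)
        fix t
        show "indicator {..x} t * ennreal \<bar>u t\<bar> \<le> ennreal (norm (indicator {0..max 0 x} t *\<^sub>R R t))"
        proof (cases "0 \<le> t \<and> t \<le> x")
          case True
          have "\<bar>exp (- \<beta> * t / ga) * R t\<bar> \<le> 1 * \<bar>R t\<bar>"
            unfolding abs_mult using exp_le1[of t] True by (intro mult_right_mono) auto
          then show ?thesis using True by (auto simp: u_def indicator_def intro!: ennreal_leI)
        qed (auto simp: u_def indicator_def)
      qed
      also have "\<dots> < \<infinity>"
      proof -
        have "integrable lborel (\<lambda>t. indicator {0..max 0 x} t *\<^sub>R R t)"
          using R_loc[of "max 0 x"] unfolding set_integrable_def by simp
        then show ?thesis unfolding integrable_iff_bounded by blast
      qed
      finally show ?thesis .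
    qed
    show "u t = g t + (\<integral>s. g s * u (t - s) \<partial>lborel)" for t
    proof (cases "0 \<le> t")
      case False
      have "(\<lambda>s. g s * u (t - s)) = (\<lambda>s. 0)"
        using False by (auto intro!: ext simp: g_def u_def)
      then show ?thesis using False by (simp add: g_def u_def)
    next
      case True
      define E where "E x = exp (- \<beta> * x / ga)" for x
      have Esplit: "E t = E s * E (t - s)" for s
        unfolding E_def using ga by (simp add: exp_add[symmetric] field_simps)
      have "u t = E t * (c * tail M t) + E t * c * (LINT s:{0..t}|lborel. R (t - s) * tail M s)"
        using R_eq[OF True] True unfolding u_def E_def by (simp add: algebra_simps)
      also have "E t * c * (LINT s:{0..t}|lborel. R (t - s) * tail M s) = (\<integral>s. E t * c * (indicator {0..t} s *\<^sub>R (R (t - s) * tail M s)) \<partial>lborel)"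
        unfolding set_lebesgue_integral_def by (rule integral_mult_right_zero[symmetric])
      also have "\<dots> = (\<integral>s. g s * u (t - s) \<partial>lborel)"
      proof (rule Bochner_Integration.integral_cong[OF refl])
        fix s
        show "E t * c * (indicator {0..t} s *\<^sub>R (R (t - s) * tail M s)) = g s * u (t - s)"
        proof (cases "0 \<le> s \<and> s \<le> t")
          case True
          then show ?thesis unfolding g_def u_def using Esplit[of s] by (simp add: E_def mult_ac)
        qed (auto simp: g_def u_def)
      qed
      finally show ?thesis using True unfolding g_def E_def by simp
    qed
  qed
  have fu: "(\<lambda>t. indicator {0..} t *\<^sub>R (exp (- \<beta> * (ga * t) / ga) * R (ga * t))) = (\<lambda>t. u (0 + ga * t))"
    using ga by (auto intro!: ext simp: u_def indicator_def zero_le_mult_iff)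
  show "set_integrable lborel {0..} (\<lambda>t. exp (- \<beta> * (ga * t) / ga) * R (ga * t))"
    unfolding set_integrable_def fu using lborel_integrable_real_affine[OF u_int, of ga 0] ga by simp
  show "(LINT t:{0..}|lborel. exp (- \<beta> * (ga * t) / ga) * R (ga * t)) = G / (1 - G) / ga"
  proof -
    have "(\<integral>x. u x \<partial>lborel) = \<bar>ga\<bar> *\<^sub>R (\<integral>x. u (0 + ga * x) \<partial>lborel)"
      using ga by (intro lborel_integral_real_affine) simp
    then show ?thesis unfolding set_lebesgue_integral_def fu using u_integral ga by simp
  qed
  show "(\<integral>\<^sup>+ t. ennreal (\<bar>exp (- \<beta> * (ga * t) / ga) * R (ga * t)\<bar> powr \<kappa> * indicator {0..} t) \<partial>lborel)
        \<le> ennreal ((7 * c) powr (\<kappa> - 1) * (G / (1 - G) / ga))" if k: "\<kappa> \<ge> 1" for \<kappa>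
  proof -
    have pw: "\<bar>x\<bar> powr \<kappa> \<le> (7 * c) powr (\<kappa> - 1) * \<bar>x\<bar>" if "\<bar>x\<bar> \<le> 7 * c" for x :: real
    proof (cases "x = 0")
      case False
      have "\<bar>x\<bar> powr \<kappa> = \<bar>x\<bar> powr (\<kappa> - 1) * \<bar>x\<bar> powr 1"
        using powr_add[of "\<bar>x\<bar>" "\<kappa> - 1" 1] by simp
      also have "\<dots> \<le> (7 * c) powr (\<kappa> - 1) * \<bar>x\<bar>"
        using False that k by (auto intro!: mult_right_mono powr_mono2)
      finally show ?thesis .
    qed simp
    have "(\<integral>\<^sup>+ t. ennreal (\<bar>exp (- \<beta> * (ga * t) / ga) * R (ga * t)\<bar> powr \<kappa> * indicator {0..} t) \<partial>lborel)
        \<le> (\<integral>\<^sup>+ t. ennreal ((7 * c) powr (\<kappa> - 1)) * ennreal \<bar>u (0 + ga * t)\<bar> \<partial>lborel)"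
    proof (intro nn_integral_mono)
      fix t
      show "ennreal (\<bar>exp (- \<beta> * (ga * t) / ga) * R (ga * t)\<bar> powr \<kappa> * indicator {0..} t) \<le> ennreal ((7 * c) powr (\<kappa> - 1)) * ennreal \<bar>u (0 + ga * t)\<bar>"
      proof (cases "0 \<le> t")
        case True
        then have "u (0 + ga * t) = exp (- \<beta> * (ga * t) / ga) * R (ga * t)" using ga by (simp add: u_def)
        then show ?thesis using True pw[OF sup_bound[of "0 + ga * t"]]
          by (auto simp: ennreal_mult[symmetric] intro!: ennreal_leI)
      qed simp
    qed
    also have "\<dots> = ennreal ((7 * c) powr (\<kappa> - 1)) * (\<integral>\<^sup>+ t. ennreal \<bar>u (0 + ga * t)\<bar> \<partial>lborel)"
      by (rule nn_integral_cmult) measurable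
    also have "(\<integral>\<^sup>+ t. ennreal \<bar>u (0 + ga * t)\<bar> \<partial>lborel) \<le> ennreal (G / (1 - G) / ga)"
    proof -
      have e: "(\<integral>\<^sup>+ x. ennreal \<bar>u x\<bar> \<partial>lborel) = ennreal ga * (\<integral>\<^sup>+ t. ennreal \<bar>u (0 + ga * t)\<bar> \<partial>lborel)"
        using nn_integral_real_affine[where c=ga and t=0 and f="\<lambda>x. ennreal \<bar>u x\<bar>"] ga by simp
      obtain r where r: "(\<integral>\<^sup>+ t. ennreal \<bar>u (0 + ga * t)\<bar> \<partial>lborel) = ennreal r" "0 \<le> r"
      proof -
        have lt: "(\<integral>\<^sup>+ x. ennreal \<bar>u x\<bar> \<partial>lborel) < \<infinity>"
          using L1 by (rule le_less_trans) simp
        have "ennreal ga * (\<integral>\<^sup>+ t. ennreal \<bar>u (0 + ga * t)\<bar> \<partial>lborel) < \<infinity>"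
          using lt unfolding e .
        then have "(\<integral>\<^sup>+ t. ennreal \<bar>u (0 + ga * t)\<bar> \<partial>lborel) < \<infinity>" using ga
          by (auto simp: ennreal_mult_less_top)
        then show ?thesis using that by (cases "(\<integral>\<^sup>+ t. ennreal \<bar>u (0 + ga * t)\<bar> \<partial>lborel)") (auto simp: ennreal_cases less_top)
      qed
      have "ennreal (ga * r) \<le> ennreal (G / (1 - G))" using L1 e r ga by (simp add: ennreal_mult)
      then have "ga * r \<le> G / (1 - G)" using G_lt G_nn by (subst (asm) ennreal_le_iff) auto
      then have "r \<le> G / (1 - G) / ga" by (metis mult.commute pos_le_divide_eq[OF ga])
      then show ?thesis using r by simp
    qed
    then have "ennreal ((7 * c) powr (\<kappa> - 1)) * (\<integral>\<^sup>+ t. ennreal \<bar>u (0 + ga * t)\<bar> \<partial>lborel) \<le> ennreal ((7 * c) powr (\<kappa> - 1)) * ennreal (G / (1 - G) / ga)"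
      by (rule mult_left_mono) simp
    also have "\<dots> = ennreal ((7 * c) powr (\<kappa> - 1) * (G / (1 - G) / ga))"
      using G_lt G_nn ga by (intro ennreal_mult[symmetric]) auto
    finally show ?thesis .
  qed
qed



lemma r_bound:
  fixes x \<alpha> :: real
  assumes x: "0 \<le> x" and a: "1 \<le> \<alpha>" "\<alpha> \<le> 2"
  shows "0 \<le> x - 1 + exp (- x)" and "x - 1 + exp (- x) \<le> x powr \<alpha>"
proof -
  show "0 \<le> x - 1 + exp (- x)" using exp_ge_add_one_self[of "-x"] by simp
  have e: "exp (- x) \<le> 1 / (1 + x)"
  proof -
    have "1 + x \<le> exp x" by (rule exp_ge_add_one_self)
    then have "1 / exp x \<le> 1 / (1 + x)" using x by (intro divide_left_mono) auto
    then show ?thesis by (simp add: exp_minus field_simps)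
  qed
  have r: "x - 1 + 1 / (1 + x) = x^2 / (1 + x)" using x by (simp add: field_simps power2_eq_square)
  have "x - 1 + exp (- x) \<le> x^2 / (1 + x)" using e r by linarith
  also have "\<dots> \<le> x powr \<alpha>"
  proof (cases "x \<le> 1")
    case True
    have "x^2 / (1 + x) \<le> x^2" using x by (simp add: divide_le_eq mult_le_cancel_left1)
    also have "x^2 = x powr 2" using x by (cases "x = 0") (simp_all add: powr_numeral)
    also have "\<dots> \<le> x powr \<alpha>" using True x a by (intro powr_mono') auto
    finally show ?thesis .
  next
    case False
    have "x^2 / (1 + x) \<le> x" using False by (simp add: divide_le_eq power2_eq_square algebra_simps)
    also have "x = x powr 1" using False by simp
    also have "\<dots> \<le> x powr \<alpha>" using False a by (intro powr_mono) auto
    finally show ?thesis .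
  qed
  finally show "x - 1 + exp (- x) \<le> x powr \<alpha>" .
qed


lemma A_asym:
  fixes M :: "real measure" and ga \<beta> \<alpha> D :: real
  assumes P: "prob_space M" and Ms: "sets M = sets borel" and supp: "measure M {0..} = 1"
    and int1: "integrable M (\<lambda>y. y)" and int2: "integrable M (\<lambda>y. y^2)"
    and ga: "0 < ga" and beta: "0 \<le> \<beta>" and a: "1 < \<alpha>" "\<alpha> < 2"
    and D0: "0 \<le> D" and Dle: "(\<integral>\<^sup>+ t. indicator {0..} t * ennreal (t powr \<alpha>) * ennreal (tail M t) \<partial>lborel) \<le> ennreal D"
  shows "\<bar>ga * ((\<integral>y. y \<partial>M) - enn2real (\<integral>\<^sup>+ t. indicator {0..} t * ennreal (exp (- \<beta> * t / ga)) * ennreal (tail M t) \<partial>lborel))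
            - \<beta> * ((1/2) * (\<integral>y. y^2 \<partial>M))\<bar> \<le> \<beta> powr \<alpha> * ga powr (1 - \<alpha>) * D"
proof -
  have tm[measurable]: "tail M \<in> borel_measurable borel" by (rule tail_meas[OF P Ms supp])
  note tn = tail_nonneg[OF P Ms supp] and t1 = tail_le1[OF P Ms supp]
  define fa where "fa t = indicator {0..} t * tail M t" for t :: real
  define fb where "fb t = indicator {0..} t * t * tail M t" for t :: real
  define fe where "fe t = indicator {0..} t * exp (- \<beta> * t / ga) * tail M t" for t :: real
  define fd where "fd t = indicator {0..} t * t powr \<alpha> * tail M t" for t :: real
  have [measurable]: "fa \<in> borel_measurable borel" unfolding fa_def by measurable
  have [measurable]: "fb \<in> borel_measurable borel" unfolding fb_def by measurable
  have [measurable]: "fe \<in> borel_measurable borel" unfolding fe_def by measurable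
  have pm: "(\<lambda>t::real. t powr \<alpha>) \<in> borel_measurable borel" by (rule powr_real_measurable) auto
  have [measurable]: "fd \<in> borel_measurable borel" unfolding fd_def using pm tm
    by (intro borel_measurable_times borel_measurable_indicator) auto
  have nna: "(\<integral>\<^sup>+ t. ennreal (fa t) \<partial>lborel) = ennreal (\<integral>y. y \<partial>M)"
    using eta_layer[OF P Ms supp int1] unfolding fa_def
    by (subst nn_integral_cong[where v="\<lambda>t. indicator {0..} t * ennreal (tail M t)"]) (auto simp: indicator_def)
  have nnb: "(\<integral>\<^sup>+ t. ennreal (fb t) \<partial>lborel) = ennreal ((1/2) * (\<integral>y. y^2 \<partial>M))"
    using sigma_layer[OF P Ms supp int2] unfolding fb_def
    by (subst nn_integral_cong[where v="\<lambda>t. indicator {0..} t * ennreal t * ennreal (tail M t)"]) (auto simp: indicator_def ennreal_mult tn)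
  have nne: "(\<integral>\<^sup>+ t. ennreal (fe t) \<partial>lborel) = (\<integral>\<^sup>+ t. indicator {0..} t * ennreal (exp (- \<beta> * t / ga)) * ennreal (tail M t) \<partial>lborel)"
    unfolding fe_def by (intro nn_integral_cong) (auto simp: indicator_def ennreal_mult tn)
  have nnd: "(\<integral>\<^sup>+ t. ennreal (fd t) \<partial>lborel) \<le> ennreal D"
    using Dle unfolding fd_def
    by (subst nn_integral_cong[where v="\<lambda>t. indicator {0..} t * ennreal (t powr \<alpha>) * ennreal (tail M t)"]) (auto simp: indicator_def ennreal_mult tn)
  have pa: "0 \<le> fa t" "0 \<le> fb t" "0 \<le> fe t" "0 \<le> fd t" for t
    unfolding fa_def fb_def fe_def fd_def using tn[of t] by (auto simp: indicator_def)
  have ia: "integrable lborel fa" using nna pa by (intro integrableI_bounded) auto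
  have ib: "integrable lborel fb" using nnb pa by (intro integrableI_bounded) auto
  have id: "integrable lborel fd" using nnd pa by (intro integrableI_bounded) (auto intro: le_less_trans)
  have ie: "integrable lborel fe"
  proof (rule Bochner_Integration.integrable_bound[OF ia])
    show "fe \<in> borel_measurable lborel" by measurable
    show "AE t in lborel. norm (fe t) \<le> norm (fa t)"
    proof (intro AE_I2)
      fix t
      have "exp (- \<beta> * t / ga) \<le> 1" if "0 \<le> t" using that beta ga by (simp add: divide_nonpos_pos mult_nonneg_nonneg)
      then show "norm (fe t) \<le> norm (fa t)" unfolding fe_def fa_def using tn[of t]
        by (auto simp: indicator_def intro: mult_left_le_one_le)
    qed
  qed
  have Ia: "(\<integral>t. fa t \<partial>lborel) = (\<integral>y. y \<partial>M)"
  proof -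
    have "ennreal (\<integral>t. fa t \<partial>lborel) = ennreal (\<integral>y. y \<partial>M)"
      using nn_integral_eq_integral[OF ia] nna pa by simp
    moreover have "0 \<le> (\<integral>t. fa t \<partial>lborel)" using pa by (simp add: integral_nonneg_AE)
    moreover have "0 \<le> (\<integral>y. y \<partial>M)" using AE_nonneg[OF P Ms supp] by (simp add: integral_nonneg_AE)
    ultimately show ?thesis by simp
  qed
  have Ib: "(\<integral>t. fb t \<partial>lborel) = (1/2) * (\<integral>y. y^2 \<partial>M)"
  proof -
    have "ennreal (\<integral>t. fb t \<partial>lborel) = ennreal ((1/2) * (\<integral>y. y^2 \<partial>M))"
      using nn_integral_eq_integral[OF ib] nnb pa by simp
    moreover have "0 \<le> (\<integral>t. fb t \<partial>lborel)" using pa by (simp add: integral_nonneg_AE)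
    moreover have "0 \<le> (\<integral>y. y^2 \<partial>M)" by (simp add: integral_nonneg_AE)
    ultimately show ?thesis by simp
  qed
  have Ie: "(\<integral>t. fe t \<partial>lborel) = enn2real (\<integral>\<^sup>+ t. indicator {0..} t * ennreal (exp (- \<beta> * t / ga)) * ennreal (tail M t) \<partial>lborel)"
    using nn_integral_eq_integral[OF ie] nne pa by (simp add: integral_nonneg_AE)
  have Id: "(\<integral>t. fd t \<partial>lborel) \<le> D"
  proof -
    have "ennreal (\<integral>t. fd t \<partial>lborel) \<le> ennreal D" using nn_integral_eq_integral[OF id] nnd pa by simp
    then show ?thesis using D0 by (subst (asm) ennreal_le_iff) auto
  qed
  define C where "C = \<beta> powr \<alpha> * ga powr (1 - \<alpha>)"
  have C_nn: "0 \<le> C" unfolding C_def by simp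
  have pt: "\<bar>ga * fa t - ga * fe t - \<beta> * fb t\<bar> \<le> C * fd t" for t
  proof (cases "0 \<le> t")
    case True
    define x where "x = \<beta> * t / ga"
    have x0: "0 \<le> x" unfolding x_def using True beta ga by simp
    have eq: "ga * fa t - ga * fe t - \<beta> * fb t = - (ga * tail M t * (x - 1 + exp (- x)))"
      unfolding fa_def fe_def fb_def x_def using True ga by (simp add: field_simps)
    have "\<bar>ga * fa t - ga * fe t - \<beta> * fb t\<bar> = ga * tail M t * (x - 1 + exp (- x))"
      unfolding eq using r_bound(1)[OF x0, of \<alpha>] a ga tn[of t] by simp
    also have "\<dots> \<le> ga * tail M t * x powr \<alpha>"
      using r_bound(2)[OF x0, of \<alpha>] a ga tn[of t] by (intro mult_left_mono) auto
    also have "x powr \<alpha> = \<beta> powr \<alpha> / ga powr \<alpha> * t powr \<alpha>"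
      unfolding x_def using ga beta True by (simp add: powr_divide powr_mult)
    also have "ga * tail M t * (\<beta> powr \<alpha> / ga powr \<alpha> * t powr \<alpha>) = C * fd t"
    proof -
      have e1: "ga / ga powr \<alpha> = ga powr (1 - \<alpha>)" using ga by (simp add: powr_diff)
      have "ga * tail M t * (\<beta> powr \<alpha> / ga powr \<alpha> * t powr \<alpha>) = (ga / ga powr \<alpha>) * (\<beta> powr \<alpha> * (t powr \<alpha> * tail M t))"
        by (simp add: divide_inverse mult_ac)
      then show ?thesis unfolding C_def fd_def e1 using True by (simp add: mult_ac)
    qed
    finally show ?thesis .
  qed (simp add: fa_def fb_def fe_def fd_def)
  have "ga * ((\<integral>y. y \<partial>M) - (\<integral>t. fe t \<partial>lborel)) - \<beta> * ((1/2) * (\<integral>y. y^2 \<partial>M))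
      = (\<integral>t. ga * fa t - ga * fe t - \<beta> * fb t \<partial>lborel)"
    using ia ib ie Ib by (simp add: Ia[symmetric] right_diff_distrib)
  also have "\<bar>\<dots>\<bar> \<le> (\<integral>t. C * fd t \<partial>lborel)"
    using ia ib ie id pt by (intro integral_abs_bound_integral) auto
  also have "\<dots> = C * (\<integral>t. fd t \<partial>lborel)" by simp
  also have "\<dots> \<le> C * D" using Id C_nn by (rule mult_left_mono)
  finally show ?thesis unfolding Ie C_def .
qed





theorem proposition5p3:
  fixes lam :: "nat \<Rightarrow> real" and Lam :: "nat \<Rightarrow> real measure"
    and p q :: "nat \<Rightarrow> nat \<Rightarrow> real" and \<gamma> :: "nat \<Rightarrow> real"
    and \<gamma>star lambda \<eta> \<sigma> b m \<alpha> \<beta> :: real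
    and \<psi> \<phi> :: "real \<Rightarrow> real"
    and R :: "nat \<Rightarrow> real \<Rightarrow> real"
  defines "\<eta>n \<equiv> (\<lambda>n. integral\<^sup>L (Lam n) (\<lambda>y. y))"
    and "\<sigma>n \<equiv> (\<lambda>n. (1/2) * integral\<^sup>L (Lam n) (\<lambda>y. y\<^sup>2))"
    and "mn \<equiv> (\<lambda>n. (\<Sum>k. real k * p n k))"
  (* standing assumptions *)
  assumes lam_pos: "\<And>n. n \<ge> 1 \<Longrightarrow> lam n > 0"
    and Lam_prob: "\<And>n. n \<ge> 1 \<Longrightarrow> prob_space (Lam n)"
    and Lam_sets: "\<And>n. n \<ge> 1 \<Longrightarrow> sets (Lam n) = sets borel"
    and Lam_supp: "\<And>n. n \<ge> 1 \<Longrightarrow> measure (Lam n) {0..} = 1"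
    and Lam_int1: "\<And>n. n \<ge> 1 \<Longrightarrow> integrable (Lam n) (\<lambda>y. y)"
    and Lam_int2: "\<And>n. n \<ge> 1 \<Longrightarrow> integrable (Lam n) (\<lambda>y. y\<^sup>2)"
    and p_nonneg: "\<And>n k. n \<ge> 1 \<Longrightarrow> p n k \<ge> 0"
    and p_zero: "\<And>n. n \<ge> 1 \<Longrightarrow> p n 0 = 0"
    and p_sums: "\<And>n. n \<ge> 1 \<Longrightarrow> p n sums 1"
    and q_nonneg: "\<And>n k. n \<ge> 1 \<Longrightarrow> q n k \<ge> 0"
    and q_zero: "\<And>n. n \<ge> 1 \<Longrightarrow> q n 0 = 0"
    and q_sums: "\<And>n. n \<ge> 1 \<Longrightarrow> q n sums 1"
    and m_fin: "\<And>n. n \<ge> 1 \<Longrightarrow> summable (\<lambda>k. real k * p n k)"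
    and gamma_pos: "\<And>n. n \<ge> 1 \<Longrightarrow> \<gamma> n > 0"
    and gamma_top: "filterlim \<gamma> at_top sequentially"
    and gamma_ratio: "(\<lambda>n. \<gamma> n / real n) \<longlonglongrightarrow> \<gamma>star" and gamma_star: "\<gamma>star \<ge> 0"
  (* Condition 1 *)
    and C1_lam: "lam \<longlonglongrightarrow> lambda" "lambda > 0"
    and C1_eta: "\<eta>n \<longlonglongrightarrow> \<eta>" "\<eta> > 0"
    and C1_sigma: "\<sigma>n \<longlonglongrightarrow> \<sigma>" "\<sigma> > 0"
    and C1_b: "(\<lambda>n. \<gamma> n * (1 - lam n * \<eta>n n)) \<longlonglongrightarrow> b"
    and C1_psi: "\<And>T. T \<ge> 0 \<Longrightarrow>
         uniform_limit {0..T} (\<lambda>n. psi_n (q n) (\<gamma> n) n) \<psi> sequentially"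
    and C1_phi_lip: "\<And>T. T \<ge> 0 \<Longrightarrow> \<exists>L. \<forall>n\<ge>1.
         lipschitz_on L {0..min T (real n)} (phi_n (p n) (\<gamma> n) n)"
    and C1_phi_lim: "\<And>T. T \<ge> 0 \<Longrightarrow>
         uniform_limit {0..T} (\<lambda>n. phi_n (p n) (\<gamma> n) n) \<phi> sequentially"
    and C1_phi_cont: "continuous_on {0..} \<phi>"
    and m_def: "(\<lambda>n. \<gamma> n * (1 - mn n)) \<longlonglongrightarrow> m"
  (* Condition 2 *)
    and alpha: "1 < \<alpha>" "\<alpha> < 2"
    and C2_1a: "\<exists>C (k0::nat). C > 0 \<and> k0 > 0 \<and> (\<forall>n\<ge>1.
         summable (\<lambda>k. if k \<ge> k0 then (real k / real n) powr \<alpha> * p n k else 0) \<and>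
         summable (\<lambda>k. real k powr \<alpha> * q n k) \<and>
         real n * \<gamma> n * (\<Sum>k. if k \<ge> k0 then (real k / real n) powr \<alpha> * p n k else 0)
           + (\<Sum>k. real k powr \<alpha> * q n k) \<le> C)"
    and C2_1b: "(\<lambda>k1. limsup (\<lambda>n. ereal (\<gamma> n *
         (\<Sum>k. if k \<ge> k1 then real k * p n k else 0)))) \<longlonglongrightarrow> 0"
    and C2_2: "\<exists>C0 Ls. C0 > 0 \<and> prob_space Ls \<and> sets Ls = sets borel
         \<and> measure Ls {0..} = 1
         \<and> (\<integral>\<^sup>+ t. ennreal (\<bar>t\<bar> powr (2 * \<alpha>)) \<partial>Ls) < \<infinity>
         \<and> (\<forall>n\<ge>1. \<forall>t\<ge>0. tail (Lam n) t \<le> C0 * tail Ls t)"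
  (* beta *)
    and beta: "\<beta> \<ge> 0" "\<beta> > - (b + m) / (\<sigma> * lambda)"
  (* R^(n): the locally integrable solution of the renewal equation *)
    and R_loc: "\<And>n T. n \<ge> 1 \<Longrightarrow> T \<ge> 0 \<Longrightarrow> set_integrable lborel {0..T} (R n)"
    and R_eq: "\<And>n t. n \<ge> 1 \<Longrightarrow> t \<ge> 0 \<Longrightarrow>
         R n t = lam n * mn n * tail (Lam n) t
               + lam n * mn n * (LINT s:{0..t}|lborel. R n (t - s) * tail (Lam n) s)"
  shows "b + m + \<beta> * \<sigma> * lambda > 0
    \<and> (\<forall>\<^sub>F n in sequentially. set_integrable lborel {0..}
          (\<lambda>t. exp (- \<beta> * (\<gamma> n * t) / \<gamma> n) * R n (\<gamma> n * t)))
    \<and> (\<lambda>n. LINT t:{0..}|lborel. exp (- \<beta> * (\<gamma> n * t) / \<gamma> n) * R n (\<gamma> n * t))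
        \<longlonglongrightarrow> 1 / (b + m + \<beta> * \<sigma> * lambda)
    \<and> (\<exists>C>0. \<exists>n0::nat. n0 \<ge> 1 \<and> (\<forall>n>n0. \<forall>\<kappa>::real. \<kappa> \<ge> 1 \<longrightarrow>
          (\<integral>\<^sup>+ t. ennreal (\<bar>exp (- \<beta> * (\<gamma> n * t) / \<gamma> n) * R n (\<gamma> n * t)\<bar> powr \<kappa>
              * indicator {0..} t) \<partial>lborel) \<le> ennreal (C powr \<kappa>)))"
  proof -
  obtain C0 Ls where C0: "C0 > 0" and LsP: "prob_space Ls" and Lss: "sets Ls = sets borel"
    and Lsupp: "measure Ls {0..} = 1"
    and Lmom: "(\<integral>\<^sup>+ t. ennreal (\<bar>t\<bar> powr (2 * \<alpha>)) \<partial>Ls) < \<infinity>"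
    and Ltail: "\<And>n t. n \<ge> 1 \<Longrightarrow> t \<ge> 0 \<Longrightarrow> tail (Lam n) t \<le> C0 * tail Ls t"
    using C2_2 by blast
  define c0 where "c0 = b + m + \<beta> * \<sigma> * lambda"
  have c0_pos: "c0 > 0"
  proof -
    have sl: "\<sigma> * lambda > 0" using C1_sigma(2) C1_lam(2) by simp
    have "- (b + m) < \<beta> * (\<sigma> * lambda)"
      using beta(2) pos_divide_less_eq[OF sl] by blast
    then show ?thesis unfolding c0_def by (simp add: mult.assoc)
  qed
  have eqm: "borel_measurable Ls = (borel_measurable borel :: (real \<Rightarrow> ennreal) set)" by (rule measurable_cong_sets[OF Lss refl])
  have [measurable]: "(\<lambda>y. ennreal (\<bar>y\<bar> powr (2 * \<alpha>))) \<in> borel_measurable Ls"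
    unfolding eqm by measurable
  have eqm2: "borel_measurable Ls = (borel_measurable borel :: (real \<Rightarrow> real) set)" by (rule measurable_cong_sets[OF Lss refl])
  have [measurable]: "(\<lambda>y. \<bar>y\<bar> powr (2 * \<alpha>)) \<in> borel_measurable Ls"
    unfolding eqm2 by measurable
  have Mfin: "(\<integral>\<^sup>+ t. indicator {0..} t * ennreal (t powr \<alpha>) * ennreal (tail Ls t) \<partial>lborel) < \<infinity>"
  proof -
    have "(\<integral>\<^sup>+ t. indicator {0..} t * ennreal (t powr \<alpha>) * ennreal (tail Ls t) \<partial>lborel) \<le> (\<integral>\<^sup>+ y. ennreal (1 + \<bar>y\<bar> powr (2 * \<alpha>)) \<partial>Ls)"
      using alpha by (intro pow_layer_bound[OF LsP Lss Lsupp]) simp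
    also have "\<dots> = (\<integral>\<^sup>+ y. 1 + ennreal (\<bar>y\<bar> powr (2 * \<alpha>)) \<partial>Ls)"
      by (intro nn_integral_cong) (simp add: ennreal_plus)
    also have "\<dots> = (\<integral>\<^sup>+ y. 1 \<partial>Ls) + (\<integral>\<^sup>+ y. ennreal (\<bar>y\<bar> powr (2 * \<alpha>)) \<partial>Ls)"
      by (rule nn_integral_add) auto
    also have "\<dots> < \<infinity>" using Lmom prob_space.emeasure_space_1[OF LsP] by simp
    finally show ?thesis .
  qed
  define Mst where "Mst = enn2real (\<integral>\<^sup>+ t. indicator {0..} t * ennreal (t powr \<alpha>) * ennreal (tail Ls t) \<partial>lborel)"
  have Mst_eq: "(\<integral>\<^sup>+ t. indicator {0..} t * ennreal (t powr \<alpha>) * ennreal (tail Ls t) \<partial>lborel) = ennreal Mst"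
    using Mfin unfolding Mst_def by (simp add: ennreal_enn2real_if)
  have Mst_nn: "0 \<le> Mst" unfolding Mst_def by simp
  have Dle: "(\<integral>\<^sup>+ t. indicator {0..} t * ennreal (t powr \<alpha>) * ennreal (tail (Lam n) t) \<partial>lborel) \<le> ennreal (C0 * Mst)"
    if n: "n \<ge> 1" for n
  proof -
    have tLm[measurable]: "tail Ls \<in> borel_measurable borel" by (rule tail_meas[OF LsP Lss Lsupp])
    have "(\<integral>\<^sup>+ t. indicator {0..} t * ennreal (t powr \<alpha>) * ennreal (tail (Lam n) t) \<partial>lborel)
        \<le> (\<integral>\<^sup>+ t. ennreal C0 * (indicator {0..} t * ennreal (t powr \<alpha>) * ennreal (tail Ls t)) \<partial>lborel)"
    proof (intro nn_integral_mono)
      fix t :: real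
      show "indicator {0..} t * ennreal (t powr \<alpha>) * ennreal (tail (Lam n) t) \<le> ennreal C0 * (indicator {0..} t * ennreal (t powr \<alpha>) * ennreal (tail Ls t))"
      proof (cases "0 \<le> t")
        case True
        have "ennreal (tail (Lam n) t) \<le> ennreal C0 * ennreal (tail Ls t)"
        proof -
          have "ennreal C0 * ennreal (tail Ls t) = ennreal (C0 * tail Ls t)"
            using C0 tail_nonneg[OF LsP Lss Lsupp, of t] by (simp add: ennreal_mult)
          then show ?thesis using Ltail[OF n True] by (simp add: ennreal_leI)
        qed
        then have "ennreal (t powr \<alpha>) * ennreal (tail (Lam n) t) \<le> ennreal (t powr \<alpha>) * (ennreal C0 * ennreal (tail Ls t))"
          by (rule mult_left_mono) simp
        then show ?thesis using True by (simp add: mult_ac)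
      qed simp
    qed
    also have "\<dots> = ennreal C0 * ennreal Mst"
      by (subst nn_integral_cmult) (auto simp: Mst_eq)
    also have "\<dots> = ennreal (C0 * Mst)" using C0 Mst_nn by (simp add: ennreal_mult)
    finally show ?thesis .
  qed
  have ginf: "filterlim \<gamma> at_infinity sequentially"
    using gamma_top by (rule filterlim_mono[OF _ at_top_le_at_infinity order_refl])
  have ev1: "\<forall>\<^sub>F n in sequentially. 1 \<le> n" by (rule eventually_ge_at_top)
  have evg: "\<forall>\<^sub>F n in sequentially. 0 < \<gamma> n" using ev1 by (rule eventually_mono) (rule gamma_pos)
  have div_lim: "(\<lambda>n. f n) \<longlonglongrightarrow> 0" if "(\<lambda>n. \<gamma> n * f n) \<longlonglongrightarrow> L" for f L
  proof -
    have "(\<lambda>n. \<gamma> n * f n / \<gamma> n) \<longlonglongrightarrow> 0" by (rule tendsto_divide_0[OF that ginf])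
    then show ?thesis by (rule Lim_transform_eventually) (use evg in \<open>auto elim: eventually_mono\<close>)
  qed
  have m1: "mn \<longlonglongrightarrow> 1"
  proof -
    have "(\<lambda>n. 1 - mn n) \<longlonglongrightarrow> 0" by (rule div_lim[OF m_def])
    then have "(\<lambda>n. 1 - (1 - mn n)) \<longlonglongrightarrow> 1 - 0" by (intro tendsto_diff tendsto_const)
    then show ?thesis by simp
  qed
  have le1: "lambda * \<eta> = 1"
  proof -
    have "(\<lambda>n. 1 - lam n * \<eta>n n) \<longlonglongrightarrow> 0" by (rule div_lim[OF C1_b])
    moreover have "(\<lambda>n. 1 - lam n * \<eta>n n) \<longlonglongrightarrow> 1 - lambda * \<eta>"
      by (intro tendsto_intros C1_lam(1) C1_eta(1))
    ultimately have "1 - lambda * \<eta> = 0" using LIMSEQ_unique by blast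
    then show ?thesis by simp
  qed
  define K where "K n = lam n * mn n" for n
  have Klim: "K \<longlonglongrightarrow> lambda" unfolding K_def using tendsto_mult[OF C1_lam(1) m1] by simp
  have bm: "(\<lambda>n. \<gamma> n * (1 - K n * \<eta>n n)) \<longlonglongrightarrow> b + m"
  proof -
    have "(\<lambda>n. \<gamma> n * (1 - lam n * \<eta>n n) + (lam n * \<eta>n n) * (\<gamma> n * (1 - mn n))) \<longlonglongrightarrow> b + (lambda * \<eta>) * m"
      by (intro tendsto_intros C1_b C1_lam(1) C1_eta(1) m_def)
    moreover have "\<gamma> n * (1 - lam n * \<eta>n n) + (lam n * \<eta>n n) * (\<gamma> n * (1 - mn n)) = \<gamma> n * (1 - K n * \<eta>n n)" for n
      unfolding K_def by (simp add: algebra_simps)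
    ultimately show ?thesis using le1 by simp
  qed
  define A where "A n = enn2real (\<integral>\<^sup>+ t. indicator {0..} t * ennreal (exp (- \<beta> * t / \<gamma> n)) * ennreal (tail (Lam n) t) \<partial>lborel)" for n
  have Xb: "\<bar>\<gamma> n * (\<eta>n n - A n) - \<beta> * \<sigma>n n\<bar> \<le> \<beta> powr \<alpha> * \<gamma> n powr (1 - \<alpha>) * (C0 * Mst)"
    if n: "n \<ge> 1" for n
    unfolding A_def \<eta>n_def \<sigma>n_def
    by (rule A_asym[OF Lam_prob[OF n] Lam_sets[OF n] Lam_supp[OF n] Lam_int1[OF n] Lam_int2[OF n] gamma_pos[OF n] beta(1) alpha _ Dle[OF n]])
       (use C0 Mst_nn in simp)
  have Xlim: "(\<lambda>n. \<gamma> n * (\<eta>n n - A n)) \<longlonglongrightarrow> \<beta> * \<sigma>"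
  proof -
    have z: "(\<lambda>n. \<beta> powr \<alpha> * \<gamma> n powr (1 - \<alpha>) * (C0 * Mst)) \<longlonglongrightarrow> \<beta> powr \<alpha> * 0 * (C0 * Mst)"
      using alpha by (intro tendsto_intros tendsto_neg_powr gamma_top) simp
    have "(\<lambda>n. \<gamma> n * (\<eta>n n - A n) - \<beta> * \<sigma>n n) \<longlonglongrightarrow> 0"
    proof (rule Lim_null_comparison[OF _ z[simplified]])
      show "\<forall>\<^sub>F n in sequentially. norm (\<gamma> n * (\<eta>n n - A n) - \<beta> * \<sigma>n n) \<le> \<beta> powr \<alpha> * \<gamma> n powr (1 - \<alpha>) * (C0 * Mst)"
        using ev1 by (rule eventually_mono) (simp add: Xb)
    qed
    then have "(\<lambda>n. (\<gamma> n * (\<eta>n n - A n) - \<beta> * \<sigma>n n) + \<beta> * \<sigma>n n) \<longlonglongrightarrow> 0 + \<beta> * \<sigma>"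
      by (intro tendsto_intros C1_sigma(1))
    then show ?thesis by simp
  qed
  define G where "G n = K n * A n" for n
  define cn where "cn n = \<gamma> n * (1 - G n)" for n
  have cnlim: "cn \<longlonglongrightarrow> c0"
  proof -
    have "(\<lambda>n. \<gamma> n * (1 - K n * \<eta>n n) + K n * (\<gamma> n * (\<eta>n n - A n))) \<longlonglongrightarrow> (b + m) + lambda * (\<beta> * \<sigma>)"
      by (intro tendsto_intros bm Klim Xlim)
    moreover have "\<gamma> n * (1 - K n * \<eta>n n) + K n * (\<gamma> n * (\<eta>n n - A n)) = cn n" for n
      unfolding cn_def G_def by (simp add: algebra_simps)
    ultimately show ?thesis unfolding c0_def by (simp add: mult_ac)
  qed
  have Glim: "G \<longlonglongrightarrow> 1"
  proof -
    have "(\<lambda>n. 1 - G n) \<longlonglongrightarrow> 0" by (rule div_lim[OF cnlim[unfolded cn_def]])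
    then have "(\<lambda>n. 1 - (1 - G n)) \<longlonglongrightarrow> 1 - 0" by (intro tendsto_intros)
    then show ?thesis by simp
  qed
  define Lv where "Lv n = G n / (1 - G n) / \<gamma> n" for n
  have Lvlim: "Lv \<longlonglongrightarrow> 1 / c0"
  proof -
    have "(\<lambda>n. G n / cn n) \<longlonglongrightarrow> 1 / c0" using c0_pos by (intro tendsto_intros Glim cnlim) simp
    moreover have "G n / cn n = Lv n" for n unfolding Lv_def cn_def by (simp add: mult.commute)
    ultimately show ?thesis by simp
  qed
  have evc: "\<forall>\<^sub>F n in sequentially. 0 < cn n" using cnlim c0_pos by (rule order_tendstoD)
  have evK: "\<forall>\<^sub>F n in sequentially. 0 < K n" using Klim C1_lam(2) by (rule order_tendstoD)
  have evK2: "\<forall>\<^sub>F n in sequentially. K n < 2 * lambda" using Klim C1_lam(2) by (intro order_tendstoD) auto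
  have evL: "\<forall>\<^sub>F n in sequentially. Lv n < 2 / c0" using Lvlim c0_pos by (intro order_tendstoD) (auto simp: field_simps)
  have good: "\<forall>\<^sub>F n in sequentially. 1 \<le> n \<and> 0 < cn n \<and> 0 < K n \<and> K n < 2 * lambda \<and> Lv n < 2 / c0"
    using ev1 evc evK evK2 evL by eventually_elim auto
  have inst: "set_integrable lborel {0..} (\<lambda>t. exp (- \<beta> * (\<gamma> n * t) / \<gamma> n) * R n (\<gamma> n * t))
    \<and> (LINT t:{0..}|lborel. exp (- \<beta> * (\<gamma> n * t) / \<gamma> n) * R n (\<gamma> n * t)) = Lv n
    \<and> (\<forall>\<kappa>. \<kappa> \<ge> 1 \<longrightarrow> (\<integral>\<^sup>+ t. ennreal (\<bar>exp (- \<beta> * (\<gamma> n * t) / \<gamma> n) * R n (\<gamma> n * t)\<bar> powr \<kappa> * indicator {0..} t) \<partial>lborel)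
        \<le> ennreal ((7 * K n) powr (\<kappa> - 1) * Lv n))"
    if n: "1 \<le> n" and cpos: "0 < cn n" and Kpos: "0 < K n" for n
  proof -
    have Glt: "K n * A n < 1"
    proof -
      have "0 < 1 - G n" using cpos gamma_pos[OF n] unfolding cn_def by (simp add: zero_less_mult_iff)
      then show ?thesis unfolding G_def by simp
    qed
    have Rl: "\<And>T. T \<ge> 0 \<Longrightarrow> set_integrable lborel {0..T} (R n)" by (rule R_loc[OF n])
    have Req: "R n t = K n * tail (Lam n) t + K n * (LINT s:{0..t}|lborel. R n (t - s) * tail (Lam n) s)" if "t \<ge> 0" for t
      using R_eq[OF n that] unfolding K_def .
    have GG: "K n * enn2real (\<integral>\<^sup>+ t. indicator {0..} t * ennreal (exp (- \<beta> * t / \<gamma> n)) * ennreal (tail (Lam n) t) \<partial>lborel) = G n"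
      unfolding G_def A_def ..
    note I = instance_lemma[of "Lam n" "K n" "\<gamma> n" \<beta> "R n", OF Lam_prob[OF n] Lam_sets[OF n] Lam_supp[OF n] Lam_int1[OF n] Kpos gamma_pos[OF n] beta(1)
        Rl Req Glt[unfolded A_def]]
    show ?thesis using I unfolding GG Lv_def by auto
  qed
  have part2: "\<forall>\<^sub>F n in sequentially. set_integrable lborel {0..}
          (\<lambda>t. exp (- \<beta> * (\<gamma> n * t) / \<gamma> n) * R n (\<gamma> n * t))"
    using good by (rule eventually_mono) (use inst in blast)
  have part3: "(\<lambda>n. LINT t:{0..}|lborel. exp (- \<beta> * (\<gamma> n * t) / \<gamma> n) * R n (\<gamma> n * t))
        \<longlonglongrightarrow> 1 / (b + m + \<beta> * \<sigma> * lambda)"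
  proof (rule Lim_transform_eventually[OF Lvlim[unfolded c0_def]])
    show "\<forall>\<^sub>F n in sequentially. Lv n = (LINT t:{0..}|lborel. exp (- \<beta> * (\<gamma> n * t) / \<gamma> n) * R n (\<gamma> n * t))"
      using good by (rule eventually_mono) (use inst in metis)
  qed
  obtain N where N: "\<And>n. n \<ge> N \<Longrightarrow> 1 \<le> n \<and> 0 < cn n \<and> 0 < K n \<and> K n < 2 * lambda \<and> Lv n < 2 / c0"
    using good unfolding eventually_sequentially by blast
  define C where "C = max (14 * lambda) (2 / c0)"
  have Cpos: "C > 0" unfolding C_def using C1_lam(2) by simp
  have part4: "\<exists>C>0. \<exists>n0::nat. n0 \<ge> 1 \<and> (\<forall>n>n0. \<forall>\<kappa>::real. \<kappa> \<ge> 1 \<longrightarrow>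
          (\<integral>\<^sup>+ t. ennreal (\<bar>exp (- \<beta> * (\<gamma> n * t) / \<gamma> n) * R n (\<gamma> n * t)\<bar> powr \<kappa>
              * indicator {0..} t) \<partial>lborel) \<le> ennreal (C powr \<kappa>))"
  proof (intro exI[of _ C] conjI exI[of _ "max N 1"] allI impI Cpos)
    show "1 \<le> max N 1" by simp
    fix n :: nat and \<kappa> :: real
    assume "max N 1 < n" and k: "1 \<le> \<kappa>"
    then have Nn: "1 \<le> n \<and> 0 < cn n \<and> 0 < K n \<and> K n < 2 * lambda \<and> Lv n < 2 / c0" using N by simp
    then have n: "1 \<le> n" and cp: "0 < cn n" and Kp: "0 < K n" by auto
    have bnd: "(\<integral>\<^sup>+ t. ennreal (\<bar>exp (- \<beta> * (\<gamma> n * t) / \<gamma> n) * R n (\<gamma> n * t)\<bar> powr \<kappa> * indicator {0..} t) \<partial>lborel)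
        \<le> ennreal ((7 * K n) powr (\<kappa> - 1) * Lv n)"
      using inst[OF n cp Kp] k by blast
    have Lv0: "0 \<le> Lv n"
    proof -
      have "0 \<le> G n" unfolding G_def A_def using Kp by simp
      moreover have "0 < 1 - G n" using cp gamma_pos[OF n] unfolding cn_def by (simp add: zero_less_mult_iff)
      ultimately show ?thesis unfolding Lv_def using gamma_pos[OF n] by simp
    qed
    have "(7 * K n) powr (\<kappa> - 1) * Lv n \<le> C powr (\<kappa> - 1) * C"
    proof (intro mult_mono powr_mono2)
      show "7 * K n \<le> C" using Nn unfolding C_def by linarith
      show "Lv n \<le> C" using Nn unfolding C_def by linarith
    qed (use k Kp Lv0 in auto)
    also have "\<dots> = C powr \<kappa>" using Cpos powr_add[of C "\<kappa> - 1" 1] by simp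
    finally show "(\<integral>\<^sup>+ t. ennreal (\<bar>exp (- \<beta> * (\<gamma> n * t) / \<gamma> n) * R n (\<gamma> n * t)\<bar> powr \<kappa> * indicator {0..} t) \<partial>lborel)
        \<le> ennreal (C powr \<kappa>)" using bnd by (meson ennreal_leI order_trans)
  qed
  show ?thesis using c0_pos part2 part3 part4 unfolding c0_def by blast
qed


end
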